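(* Consider a sequence of finite populations indexed by $n\to\infty$, each satisfying Assumption 1, Assumption 2 and the null hypothesis $H_0:\ T_i(1)=T_i(0)$ for all $i$, and suppose Condition 2 holds; condition on all potential event times. Let $\mathcal{K}_0=\{k:\lim_{n}d_k/n>0,\ \lim_nh_k<1,\ \lim_nG_1(t_k)>0,\ \lim_nG_0(t_k)>0\}$ (nonempty by Condition 2). For $1\le k\le K$: (i) if $k\in\mathcal{K}_0$, then $\lim_{n\to\infty}\mathbb{E}(V_k\mid\boldsymbol{T}(1),\boldsymbol{T}(0))/n>0$, $V_k/n=\mathbb{E}(V_k\mid\boldsymbol{T}(1),\boldsymbol{T}(0))/n+o_{\Pr}(1)$, $\mathbb{E}\big(\mathbb{1}(V_k>0)/V_k^{1/2}\mid\boldsymbol{T}(1),\boldsymbol{T}(0)\big)=o(1)$, and $\Pr(V_k=0\mid\boldsymbol{T}(1),\boldsymbol{T}(0))=o(1)$; (ii) otherwise, $\mathbb{E}(V_k\mid\boldsymbol{T}(1),\boldsymbol{T}(0))/n=o(1)$ and $V_k/n=o_{\Pr}(1)$.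
   Context: Unit $i$ ($1\le i\le n$) has potential event times $T_i(1),T_i(0)\ge 0$ (fixed constants), potential censoring times $C_i(1),C_i(0)\in[0,\infty]$, treatment indicator $Z_i\in\{0,1\}$; bold letters denote $n$-vectors. Assumption 1: conditional on all potential event and censoring times, the $Z_i$ are i.i.d. Bernoulli$(p_1)$, $p_1=1-p_0\in(0,1)$. Assumption 2: $(\boldsymbol{C}(1),\boldsymbol{C}(0))$ is independent of $(\boldsymbol{T}(1),\boldsymbol{T}(0))$ and the pairs $(C_i(1),C_i(0))$ are i.i.d. across $i$. $G_z(c)=\Pr(C_i(z)\ge c)$. Realized: $W_i=\min\{T_i,C_i\}$, $\Delta_i=\mathbb{1}(T_i\le C_i)$ with $T_i=Z_iT_i(1)+(1-Z_i)T_i(0)$, $C_i=Z_iC_i(1)+(1-Z_i)C_i(0)$. Let $t_1<\dots<t_K$ be the distinct values of $\{T_i(0)\}$, $d_k=\#\{i:T_i(0)=t_k\}$, $n_k=\#\{i:T_i(0)\ge t_k\}$, $h_k=d_k/n_k$; $N_{1k},N_{0k}$ the numbers of treated / control units with $W_i\ge t_k$, $N_k=N_{1k}+N_{0k}$, $D_k=\sum_i\Delta_i\mathbb{1}(W_i=t_k)$, $V_k=D_k(N_k-D_k)N_{1k}N_{0k}/\{N_k^2(N_k-1)\}$ (convention $0/0:=0$). Quantities may depend on $n$. Condition 2: as $n\to\infty$, $K$ is fixed, and for $z=0,1$, $1\le k\le K$: $p_z$ has a positive limit; $d_k/n$ has a limit; $G_z(t_k)$ has a limit; and for at least one $k$,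 $d_k/n$, $G_1(t_k)$, $G_0(t_k)$ have positive limits and $\lim h_k<1$. *)

theory Defs
  imports "HOL-Probability.Probability"
begin

text \<open>T1, T0 are the potential event times
 (only indices i < n are used). An outcome w assigns to unit i the triple
 (Z_i, (C_i(1), C_i(0))) with Z_i = True meaning treated.\<close>

type_synonym outcome = "nat \<Rightarrow> bool \<times> ereal \<times> ereal"

definition popM :: "nat \<Rightarrow> real \<Rightarrow> (ereal \<times> ereal) measure \<Rightarrow> outcome measure" where
  "popM n p1 Q = PiM {..<n} (\<lambda>_. measure_pmf (bernoulli_pmf p1) \<Otimes>\<^sub>M Q)"

definition Gsurv :: "(ereal \<times> ereal) measure \<Rightarrow> bool \<Rightarrow> real \<Rightarrow> real" where
  "Gsurv Q z c = measure Q {x \<in> space Q. ereal c \<le> (if z then fst x else snd x)}"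

definition tval :: "nat \<Rightarrow> (nat \<Rightarrow> real) \<Rightarrow> nat \<Rightarrow> real" where
  "tval n T0 k = sorted_list_of_set (T0 ` {..<n}) ! (k - 1)"

definition dcnt :: "nat \<Rightarrow> (nat \<Rightarrow> real) \<Rightarrow> nat \<Rightarrow> nat" where
  "dcnt n T0 k = card {i. i < n \<and> T0 i = tval n T0 k}"

definition ncnt :: "nat \<Rightarrow> (nat \<Rightarrow> real) \<Rightarrow> nat \<Rightarrow> nat" where
  "ncnt n T0 k = card {i. i < n \<and> T0 i \<ge> tval n T0 k}"

definition hrate :: "nat \<Rightarrow> (nat \<Rightarrow> real) \<Rightarrow> nat \<Rightarrow> real" where
  "hrate n T0 k = real (dcnt n T0 k) / real (ncnt n T0 k)"

definition Zt :: "outcome \<Rightarrow> nat \<Rightarrow> bool" where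
  "Zt w i = fst (w i)"

definition Cobs :: "outcome \<Rightarrow> nat \<Rightarrow> ereal" where
  "Cobs w i = (if fst (w i) then fst (snd (w i)) else snd (snd (w i)))"

definition Tobs :: "(nat \<Rightarrow> real) \<Rightarrow> (nat \<Rightarrow> real) \<Rightarrow> outcome \<Rightarrow> nat \<Rightarrow> real" where
  "Tobs T1 T0 w i = (if fst (w i) then T1 i else T0 i)"

definition Wobs :: "(nat \<Rightarrow> real) \<Rightarrow> (nat \<Rightarrow> real) \<Rightarrow> outcome \<Rightarrow> nat \<Rightarrow> ereal" where
  "Wobs T1 T0 w i = min (ereal (Tobs T1 T0 w i)) (Cobs w i)"

definition Dobs :: "(nat \<Rightarrow> real) \<Rightarrow> (nat \<Rightarrow> real) \<Rightarrow> outcome \<Rightarrow> nat \<Rightarrow> bool" where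
  "Dobs T1 T0 w i = (ereal (Tobs T1 T0 w i) \<le> Cobs w i)"

definition N1 :: "nat \<Rightarrow> (nat \<Rightarrow> real) \<Rightarrow> (nat \<Rightarrow> real) \<Rightarrow> nat \<Rightarrow> outcome \<Rightarrow> nat" where
  "N1 n T1 T0 k w = card {i. i < n \<and> Zt w i \<and> Wobs T1 T0 w i \<ge> ereal (tval n T0 k)}"

definition N0 :: "nat \<Rightarrow> (nat \<Rightarrow> real) \<Rightarrow> (nat \<Rightarrow> real) \<Rightarrow> nat \<Rightarrow> outcome \<Rightarrow> nat" where
  "N0 n T1 T0 k w = card {i. i < n \<and> \<not> Zt w i \<and> Wobs T1 T0 w i \<ge> ereal (tval n T0 k)}"

definition Dk :: "nat \<Rightarrow> (nat \<Rightarrow> real) \<Rightarrow> (nat \<Rightarrow> real) \<Rightarrow> nat \<Rightarrow> outcome \<Rightarrow> nat" where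
  "Dk n T1 T0 k w = card {i. i < n \<and> Dobs T1 T0 w i \<and> Wobs T1 T0 w i = ereal (tval n T0 k)}"

text \<open>V_k; Isabelle's x / 0 = 0 realises the convention 0/0 := 0
 (the denominator vanishes only when the numerator does).\<close>
definition Vk :: "nat \<Rightarrow> (nat \<Rightarrow> real) \<Rightarrow> (nat \<Rightarrow> real) \<Rightarrow> nat \<Rightarrow> outcome \<Rightarrow> real" where
  "Vk n T1 T0 k w =
    (let a = real (N1 n T1 T0 k w); b = real (N0 n T1 T0 k w); N = a + b;
         D = real (Dk n T1 T0 k w)
     in D * (N - D) * a * b / (N\<^sup>2 * (N - 1)))"

definition condition2 ::
  "(nat \<Rightarrow> real) \<Rightarrow> (nat \<Rightarrow> nat \<Rightarrow> real) \<Rightarrow> (nat \<Rightarrow> (ereal \<times> ereal) measure) \<Rightarrow> nat \<Rightarrow> bool" where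
  "condition2 p1 T0 Q K \<longleftrightarrow>
     (\<forall>\<^sub>F n in sequentially. card (T0 n ` {..<n}) = K) \<and>
     (\<exists>a>0. p1 \<longlonglongrightarrow> a) \<and> (\<exists>a>0. (\<lambda>n. 1 - p1 n) \<longlonglongrightarrow> a) \<and>
     (\<forall>k\<in>{1..K}. convergent (\<lambda>n. real (dcnt n (T0 n) k) / real n) \<and>
        convergent (\<lambda>n. Gsurv (Q n) True (tval n (T0 n) k)) \<and>
        convergent (\<lambda>n. Gsurv (Q n) False (tval n (T0 n) k))) \<and>
     (\<exists>k\<in>{1..K}. lim (\<lambda>n. real (dcnt n (T0 n) k) / real n) > 0 \<and>
        lim (\<lambda>n. Gsurv (Q n) True (tval n (T0 n) k)) > 0 \<and>
        lim (\<lambda>n. Gsurv (Q n) False (tval n (T0 n) k)) > 0 \<and>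
        lim (\<lambda>n. hrate n (T0 n) k) < 1)"

definition Kzero ::
  "(nat \<Rightarrow> nat \<Rightarrow> real) \<Rightarrow> (nat \<Rightarrow> (ereal \<times> ereal) measure) \<Rightarrow> nat \<Rightarrow> nat set" where
  "Kzero T0 Q K = {k \<in> {1..K}. lim (\<lambda>n. real (dcnt n (T0 n) k) / real n) > 0 \<and>
        lim (\<lambda>n. hrate n (T0 n) k) < 1 \<and>
        lim (\<lambda>n. Gsurv (Q n) True (tval n (T0 n) k)) > 0 \<and>
        lim (\<lambda>n. Gsurv (Q n) False (tval n (T0 n) k)) > 0}"

end

theory Submission
  imports Defs "HOL-Real_Asymp.Real_Asymp"
begin

lemma indep_coords:
  fixes \<mu> :: "'a measure"
  assumes "prob_space \<mu>" "finite I"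
  shows "prob_space.indep_vars (PiM I (\<lambda>_. \<mu>)) (\<lambda>_. \<mu>) (\<lambda>i w. w i) I"
proof -
  interpret P: prob_space "PiM I (\<lambda>_. \<mu>)" by (intro prob_space_PiM assms)
  show ?thesis
  proof (cases "I = {}")
    case True
    then show ?thesis unfolding P.indep_vars_def P.indep_sets_def by simp
  next
    case False
    show ?thesis
    proof (subst P.indep_vars_iff_distr_eq_PiM'[OF False])
      show "(\<lambda>w. w i) \<in> measurable (PiM I (\<lambda>_. \<mu>)) \<mu>" if "i \<in> I" for i using that by measurable
      have 1: "distr (PiM I (\<lambda>_. \<mu>)) (PiM I (\<lambda>_. \<mu>)) (\<lambda>x. restrict x I) = PiM I (\<lambda>_. \<mu>)"
        by (subst distr_cong[where g="\<lambda>x. x"]) (auto simp: space_PiM distr_id)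
      show "distr (Pi\<^sub>M I (\<lambda>_. \<mu>)) (Pi\<^sub>M I (\<lambda>_. \<mu>)) (\<lambda>x. \<lambda>i\<in>I. x i) =
        Pi\<^sub>M I (\<lambda>i. distr (Pi\<^sub>M I (\<lambda>_. \<mu>)) \<mu> (\<lambda>w. w i))"
        using 1 distr_PiM_component[of I "\<lambda>_. \<mu>"] assms
        by (simp cong: PiM_cong)
    qed
  qed
qed

lemma integral_PiM_coord:
  fixes \<mu> :: "'a measure" and f :: "'a \<Rightarrow> real"
  assumes "prob_space \<mu>" "i \<in> I" "f \<in> borel_measurable \<mu>"
  shows "(\<integral>w. f (w i) \<partial>PiM I (\<lambda>_. \<mu>)) = (\<integral>x. f x \<partial>\<mu>)"
proof -
  have "(\<integral>x. f x \<partial>\<mu>) = (\<integral>x. f x \<partial>distr (PiM I (\<lambda>_. \<mu>)) \<mu> (\<lambda>w. w i))"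
    using distr_PiM_component[of I "\<lambda>_. \<mu>" i] assms by simp
  also have "\<dots> = (\<integral>w. f (w i) \<partial>PiM I (\<lambda>_. \<mu>))"
    using assms by (subst integral_distr) auto
  finally show ?thesis by simp
qed

lemma core:
  fixes \<mu> :: "'a measure" and B :: "nat \<Rightarrow> 'a set" and n :: nat
  assumes mu: "prob_space \<mu>" and B: "\<And>i. i < n \<Longrightarrow> B i \<in> sets \<mu>" and n: "n > 0" and e: "e \<ge> 0"
  shows "(\<lambda>w. \<Sum>i<n. indicator (B i) (w i) :: real) \<in> borel_measurable (PiM {..<n} (\<lambda>_. \<mu>))"
    and "(\<integral>w. (\<Sum>i<n. indicator (B i) (w i) :: real) \<partial>PiM {..<n} (\<lambda>_. \<mu>)) = (\<Sum>i<n. measure \<mu> (B i))"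
    and "measure (PiM {..<n} (\<lambda>_. \<mu>)) {w \<in> space (PiM {..<n} (\<lambda>_. \<mu>)).
            \<bar>(\<Sum>i<n. indicator (B i) (w i) :: real) - (\<Sum>i<n. measure \<mu> (B i))\<bar> \<ge> e}
          \<le> 2 * exp (-2 * e\<^sup>2 / real n)"
proof -
  let ?M = "PiM {..<n} (\<lambda>_. \<mu>)"
  interpret P: prob_space ?M by (intro prob_space_PiM mu)
  have meas: "(\<lambda>w. indicator (B i) (w i) :: real) \<in> borel_measurable ?M" if "i < n" for i
  proof -
    have "i \<in> {..<n}" using that by simp
    then show ?thesis using B[OF that] by measurable
  qed
  show "(\<lambda>w. \<Sum>i<n. indicator (B i) (w i) :: real) \<in> borel_measurable ?M"
    using meas by (intro borel_measurable_sum) auto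
  have E: "(\<integral>w. indicator (B i) (w i) \<partial>?M) = measure \<mu> (B i)" if "i < n" for i
    using integral_PiM_coord[OF mu, of i "{..<n}" "indicator (B i)"] B[OF that] that by simp
  have int: "integrable ?M (\<lambda>w. indicator (B i) (w i) :: real)" if "i < n" for i
    by (rule P.integrable_const_bound[where B=1]) (use meas[OF that] in auto)
  show "(\<integral>w. (\<Sum>i<n. indicator (B i) (w i) :: real) \<partial>?M) = (\<Sum>i<n. measure \<mu> (B i))"
    using E int by (subst Bochner_Integration.integral_sum) auto
  have ind: "P.indep_vars (\<lambda>_. borel) (\<lambda>i w. indicator (B i) (w i) :: real) {..<n}"
    by (rule P.indep_vars_compose2[OF indep_coords[OF mu]]) (use B in auto)
  interpret H: Hoeffding_ineq ?M "{..<n}" "\<lambda>i w. indicator (B i) (w i) :: real" "\<lambda>_. 0" "\<lambda>_. 1"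
       "\<Sum>i<n. P.expectation (\<lambda>w. indicator (B i) (w i))"
    by unfold_locales (use ind in auto)
  have mu_eq: "(\<Sum>i<n. P.expectation (\<lambda>w. indicator (B i) (w i) :: real)) = (\<Sum>i<n. measure \<mu> (B i))"
    using E by simp
  show "measure ?M {w \<in> space ?M.
            \<bar>(\<Sum>i<n. indicator (B i) (w i) :: real) - (\<Sum>i<n. measure \<mu> (B i))\<bar> \<ge> e}
          \<le> 2 * exp (-2 * e\<^sup>2 / real n)"
    using H.Hoeffding_ineq_abs_ge[OF e] n unfolding mu_eq by simp
qed

lemma borel_fst_ge: "{c :: ereal \<times> ereal. ereal t \<le> fst c} \<in> sets borel"
  by (intro borel_closed closed_Collect_le continuous_intros)

lemma borel_snd_ge: "{c :: ereal \<times> ereal. ereal t \<le> snd c} \<in> sets borel"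
  by (intro borel_closed closed_Collect_le continuous_intros)

lemma mu_facts:
  fixes Q :: "(ereal \<times> ereal) measure" and p t :: real
  assumes Q: "prob_space Q" and Qs: "sets Q = sets borel" and p: "0 \<le> p" "p \<le> 1"
  defines "\<mu> \<equiv> measure_pmf (bernoulli_pmf p) \<Otimes>\<^sub>M Q"
  shows "prob_space \<mu>"
    and "{x. fst x \<and> ereal t \<le> fst (snd x)} \<in> sets \<mu>"
    and "measure \<mu> {x. fst x \<and> ereal t \<le> fst (snd x)} = p * Gsurv Q True t"
    and "{x. \<not> fst x \<and> ereal t \<le> snd (snd x)} \<in> sets \<mu>"
    and "measure \<mu> {x. \<not> fst x \<and> ereal t \<le> snd (snd x)} = (1 - p) * Gsurv Q False t"
    and "{x. ereal t \<le> (if fst x then fst (snd x) else snd (snd x))} \<in> sets \<mu>"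
    and "measure \<mu> {x. ereal t \<le> (if fst x then fst (snd x) else snd (snd x))}
           = p * Gsurv Q True t + (1 - p) * Gsurv Q False t"
proof -
  interpret Q: prob_space Q by fact
  have spQ: "space Q = UNIV" using sets_eq_imp_space_eq[OF Qs] by simp
  show "prob_space \<mu>" unfolding \<mu>_def
    by (intro prob_space_pair measure_pmf.prob_space_axioms Q)
  have A1: "{c. ereal t \<le> fst c} \<in> sets Q" using borel_fst_ge Qs by simp
  have A0: "{c. ereal t \<le> snd c} \<in> sets Q" using borel_snd_ge Qs by simp
  have e1: "{x. fst x \<and> ereal t \<le> fst (snd x)} = {True} \<times> {c. ereal t \<le> fst c}" by auto
  have e0: "{x. \<not> fst x \<and> ereal t \<le> snd (snd x)} = {False} \<times> {c. ereal t \<le> snd c}" by auto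
  show s1: "{x. fst x \<and> ereal t \<le> fst (snd x)} \<in> sets \<mu>" unfolding e1 \<mu>_def
    using A1 by (intro pair_measureI) auto
  show s0: "{x. \<not> fst x \<and> ereal t \<le> snd (snd x)} \<in> sets \<mu>" unfolding e0 \<mu>_def
    using A0 by (intro pair_measureI) auto
  have G1: "Gsurv Q True t = measure Q {c. ereal t \<le> fst c}" unfolding Gsurv_def spQ by simp
  have G0: "Gsurv Q False t = measure Q {c. ereal t \<le> snd c}" unfolding Gsurv_def spQ by simp
  show m1: "measure \<mu> {x. fst x \<and> ereal t \<le> fst (snd x)} = p * Gsurv Q True t"
    unfolding e1 \<mu>_def G1 measure_def
    using A1 p by (subst Q.emeasure_pair_measure_Times) (auto simp: emeasure_pmf_single enn2real_mult)
  show m0: "measure \<mu> {x. \<not> fst x \<and> ereal t \<le> snd (snd x)} = (1 - p) * Gsurv Q False t"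
    unfolding e0 \<mu>_def G0 measure_def
    using A0 p by (subst Q.emeasure_pair_measure_Times) (auto simp: emeasure_pmf_single enn2real_mult)
  have eu: "{x. ereal t \<le> (if fst x then fst (snd x) else snd (snd x))} =
     {x. fst x \<and> ereal t \<le> fst (snd x)} \<union> {x. \<not> fst x \<and> ereal t \<le> snd (snd x)}" by auto
  show "{x. ereal t \<le> (if fst x then fst (snd x) else snd (snd x))} \<in> sets \<mu>"
    unfolding eu using s1 s0 by auto
  interpret mu: prob_space \<mu> by fact
  show "measure \<mu> {x. ereal t \<le> (if fst x then fst (snd x) else snd (snd x))}
           = p * Gsurv Q True t + (1 - p) * Gsurv Q False t"
    unfolding eu using s1 s0 m1 m0 by (subst mu.finite_measure_Union) auto
qed

lemma card_sum_if: "real (card {i. i < (n::nat) \<and> P i}) = (\<Sum>i<n. if P i then 1 else 0)"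
proof (induction n)
  case 0 then show ?case by simp
next
  case (Suc n)
  have "{i. i < Suc n \<and> P i} = (if P n then insert n {i. i < n \<and> P i} else {i. i < n \<and> P i})"
    by (auto simp: less_Suc_eq)
  then show ?case using Suc by auto
qed

lemma model:
  fixes Q :: "(ereal \<times> ereal) measure" and p :: real and T1 T0 :: "nat \<Rightarrow> real" and n k :: nat
  assumes n: "n > 0" and Q: "prob_space Q" and Qs: "sets Q = sets borel" and p: "0 \<le> p" "p \<le> 1"
    and H0: "\<And>i. i < n \<Longrightarrow> T1 i = T0 i" and e: "e \<ge> 0"
  defines "t \<equiv> tval n T0 k"
  defines "B1 \<equiv> \<lambda>i. if t \<le> T0 i then {x. fst x \<and> ereal t \<le> fst (snd x)} else {}"
  defines "B0 \<equiv> \<lambda>i. if t \<le> T0 i then {x. \<not> fst x \<and> ereal t \<le> snd (snd x)} else {}"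
  defines "BD \<equiv> \<lambda>i. if T0 i = t then {x. ereal t \<le> (if fst x then fst (snd x) else snd (snd x))} else {}"
  defines "S1 \<equiv> \<lambda>w. \<Sum>i<n. indicator (B1 i) (w i) :: real"
  defines "S0 \<equiv> \<lambda>w. \<Sum>i<n. indicator (B0 i) (w i) :: real"
  defines "SD \<equiv> \<lambda>w. \<Sum>i<n. indicator (BD i) (w i) :: real"
  defines "M \<equiv> popM n p Q"
  shows "prob_space M"
    and "\<And>w. real (N1 n T1 T0 k w) = S1 w" "\<And>w. real (N0 n T1 T0 k w) = S0 w"
    and "\<And>w. real (Dk n T1 T0 k w) = SD w"
    and "S1 \<in> borel_measurable M" "S0 \<in> borel_measurable M" "SD \<in> borel_measurable M"
    and "(\<integral>w. S1 w \<partial>M) = real (ncnt n T0 k) * (p * Gsurv Q True t)"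
    and "(\<integral>w. S0 w \<partial>M) = real (ncnt n T0 k) * ((1 - p) * Gsurv Q False t)"
    and "(\<integral>w. SD w \<partial>M) = real (dcnt n T0 k) * (p * Gsurv Q True t + (1 - p) * Gsurv Q False t)"
    and "measure M {w \<in> space M. \<bar>S1 w - real (ncnt n T0 k) * (p * Gsurv Q True t)\<bar> \<ge> e}
           \<le> 2 * exp (-2 * e\<^sup>2 / real n)"
    and "measure M {w \<in> space M. \<bar>S0 w - real (ncnt n T0 k) * ((1 - p) * Gsurv Q False t)\<bar> \<ge> e}
           \<le> 2 * exp (-2 * e\<^sup>2 / real n)"
    and "measure M {w \<in> space M. \<bar>SD w - real (dcnt n T0 k) * (p * Gsurv Q True t + (1 - p) * Gsurv Q False t)\<bar> \<ge> e}
           \<le> 2 * exp (-2 * e\<^sup>2 / real n)"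
    and "\<And>w. SD w \<le> S1 w + S0 w" "\<And>w. SD w \<le> real (dcnt n T0 k)"
    and "\<And>w. S1 w + S0 w - SD w \<le> real (ncnt n T0 k) - real (dcnt n T0 k)"
    and "\<And>w. S1 w + S0 w \<le> real n"
proof -
  define \<mu> where "\<mu> = measure_pmf (bernoulli_pmf p) \<Otimes>\<^sub>M Q"
  note mf = mu_facts(1)[OF Q Qs p, folded \<mu>_def] mu_facts(2-7)[OF Q Qs p, where t=t, folded \<mu>_def]
  have Meq: "M = PiM {..<n} (\<lambda>_. \<mu>)" unfolding M_def popM_def \<mu>_def ..
  show "prob_space M" unfolding Meq by (intro prob_space_PiM mf(1))
  have B1s: "B1 i \<in> sets \<mu>" for i unfolding B1_def using mf by auto
  have B0s: "B0 i \<in> sets \<mu>" for i unfolding B0_def using mf by auto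
  have BDs: "BD i \<in> sets \<mu>" for i unfolding BD_def using mf by auto
  note c1 = core[where B=B1, OF mf(1) B1s n e, folded Meq S1_def]
  note c0 = core[where B=B0, OF mf(1) B0s n e, folded Meq S0_def]
  note cD = core[where B=BD, OF mf(1) BDs n e, folded Meq SD_def]
  have mB1: "(\<Sum>i<n. measure \<mu> (B1 i)) = real (ncnt n T0 k) * (p * Gsurv Q True t)"
  proof -
    have "(\<Sum>i<n. measure \<mu> (B1 i)) = (\<Sum>i<n. (if t \<le> T0 i then 1 else 0) * (p * Gsurv Q True t))"
      unfolding B1_def using mf by (intro sum.cong) auto
    also have "\<dots> = real (ncnt n T0 k) * (p * Gsurv Q True t)"
      unfolding sum_distrib_right[symmetric] ncnt_def card_sum_if t_def ..
    finally show ?thesis .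
  qed
  have mB0: "(\<Sum>i<n. measure \<mu> (B0 i)) = real (ncnt n T0 k) * ((1 - p) * Gsurv Q False t)"
  proof -
    have "(\<Sum>i<n. measure \<mu> (B0 i)) = (\<Sum>i<n. (if t \<le> T0 i then 1 else 0) * ((1 - p) * Gsurv Q False t))"
      unfolding B0_def using mf by (intro sum.cong) auto
    also have "\<dots> = real (ncnt n T0 k) * ((1 - p) * Gsurv Q False t)"
      unfolding sum_distrib_right[symmetric] ncnt_def card_sum_if t_def ..
    finally show ?thesis .
  qed
  have mBD: "(\<Sum>i<n. measure \<mu> (BD i)) = real (dcnt n T0 k) * (p * Gsurv Q True t + (1 - p) * Gsurv Q False t)"
  proof -
    have "(\<Sum>i<n. measure \<mu> (BD i)) = (\<Sum>i<n. (if T0 i = t then 1 else 0) * (p * Gsurv Q True t + (1 - p) * Gsurv Q False t))"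
      unfolding BD_def using mf by (intro sum.cong) auto
    also have "\<dots> = real (dcnt n T0 k) * (p * Gsurv Q True t + (1 - p) * Gsurv Q False t)"
      unfolding sum_distrib_right[symmetric] dcnt_def card_sum_if t_def ..
    finally show ?thesis .
  qed
  show "S1 \<in> borel_measurable M" "S0 \<in> borel_measurable M" "SD \<in> borel_measurable M"
    using c1(1) c0(1) cD(1) by auto
  show "(\<integral>w. S1 w \<partial>M) = real (ncnt n T0 k) * (p * Gsurv Q True t)"
    using c1(2) mB1 by (simp add: S1_def)
  show "(\<integral>w. S0 w \<partial>M) = real (ncnt n T0 k) * ((1 - p) * Gsurv Q False t)"
    using c0(2) mB0 by (simp add: S0_def)
  show "(\<integral>w. SD w \<partial>M) = real (dcnt n T0 k) * (p * Gsurv Q True t + (1 - p) * Gsurv Q False t)"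
    using cD(2) mBD by (simp add: SD_def)
  show "measure M {w \<in> space M. \<bar>S1 w - real (ncnt n T0 k) * (p * Gsurv Q True t)\<bar> \<ge> e}
           \<le> 2 * exp (-2 * e\<^sup>2 / real n)"
    using c1(3) mB1 by (simp add: S1_def)
  show "measure M {w \<in> space M. \<bar>S0 w - real (ncnt n T0 k) * ((1 - p) * Gsurv Q False t)\<bar> \<ge> e}
           \<le> 2 * exp (-2 * e\<^sup>2 / real n)"
    using c0(3) mB0 by (simp add: S0_def)
  show "measure M {w \<in> space M. \<bar>SD w - real (dcnt n T0 k) * (p * Gsurv Q True t + (1 - p) * Gsurv Q False t)\<bar> \<ge> e}
           \<le> 2 * exp (-2 * e\<^sup>2 / real n)"
    using cD(3) mBD by (simp add: SD_def)
  fix w :: outcome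
  have i1: "(Zt w i \<and> ereal t \<le> Wobs T1 T0 w i) \<longleftrightarrow> w i \<in> B1 i" if "i < n" for i
    using H0[OF that] unfolding B1_def Zt_def Wobs_def Tobs_def Cobs_def by auto
  have i0: "(\<not> Zt w i \<and> ereal t \<le> Wobs T1 T0 w i) \<longleftrightarrow> w i \<in> B0 i" if "i < n" for i
    using H0[OF that] unfolding B0_def Zt_def Wobs_def Tobs_def Cobs_def by auto
  have iD: "(Dobs T1 T0 w i \<and> Wobs T1 T0 w i = ereal t) \<longleftrightarrow> w i \<in> BD i" if "i < n" for i
    using H0[OF that] unfolding BD_def Dobs_def Wobs_def Tobs_def Cobs_def
    by (auto simp: min_def split: if_splits)
  have "real (N1 n T1 T0 k w) = real (card {i. i < n \<and> w i \<in> B1 i})"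
    unfolding N1_def t_def[symmetric] using i1 by (metis (no_types, lifting))
  also have "\<dots> = S1 w" unfolding S1_def by (subst card_sum_if) (intro sum.cong, auto simp: indicator_def)
  finally show "real (N1 n T1 T0 k w) = S1 w" .
  have "real (N0 n T1 T0 k w) = real (card {i. i < n \<and> w i \<in> B0 i})"
    unfolding N0_def t_def[symmetric] using i0 by (metis (no_types, lifting))
  also have "\<dots> = S0 w" unfolding S0_def by (subst card_sum_if) (intro sum.cong, auto simp: indicator_def)
  finally show "real (N0 n T1 T0 k w) = S0 w" .
  have "real (Dk n T1 T0 k w) = real (card {i. i < n \<and> w i \<in> BD i})"
    unfolding Dk_def t_def[symmetric] using iD by (metis (no_types, lifting))
  also have "\<dots> = SD w" unfolding SD_def by (subst card_sum_if) (intro sum.cong, auto simp: indicator_def)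
  finally show "real (Dk n T1 T0 k w) = SD w" .
  have "S1 w + S0 w \<le> (\<Sum>i<n. 1)" unfolding S1_def S0_def sum.distrib[symmetric]
    by (intro sum_mono) (auto simp: B1_def B0_def indicator_def)
  then show "S1 w + S0 w \<le> real n" by simp
  show "SD w \<le> S1 w + S0 w" unfolding SD_def S1_def S0_def sum.distrib[symmetric]
    by (intro sum_mono) (auto simp: BD_def B1_def B0_def indicator_def)
  show "SD w \<le> real (dcnt n T0 k)" unfolding SD_def dcnt_def card_sum_if t_def[symmetric]
    by (intro sum_mono) (auto simp: BD_def indicator_def)
  have "real (ncnt n T0 k) - real (dcnt n T0 k) = (\<Sum>i<n. if t < T0 i then 1 else 0)"
    unfolding ncnt_def dcnt_def card_sum_if t_def[symmetric] sum_subtractf[symmetric]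
    by (intro sum.cong) auto
  then show "S1 w + S0 w - SD w \<le> real (ncnt n T0 k) - real (dcnt n T0 k)"
    unfolding SD_def S1_def S0_def sum.distrib[symmetric] sum_subtractf[symmetric]
    by (simp only:) (intro sum_mono, auto simp: BD_def B1_def B0_def indicator_def)
qed

lemma model2:
  fixes Q :: "(ereal \<times> ereal) measure" and p :: real and T1 T0 :: "nat \<Rightarrow> real" and n k :: nat
  assumes n: "n > 0" and Q: "prob_space Q" and Qs: "sets Q = sets borel" and p: "0 \<le> p" "p \<le> 1"
    and H0: "\<And>i. i < n \<Longrightarrow> T1 i = T0 i" and e: "e \<ge> 0"
  shows "prob_space (popM n p Q)"
    and "(\<lambda>w. real (N1 n T1 T0 k w)) \<in> borel_measurable (popM n p Q)"
    and "(\<lambda>w. real (N0 n T1 T0 k w)) \<in> borel_measurable (popM n p Q)"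
    and "(\<lambda>w. real (Dk n T1 T0 k w)) \<in> borel_measurable (popM n p Q)"
    and "(\<integral>w. real (N1 n T1 T0 k w) \<partial>popM n p Q) = real (ncnt n T0 k) * (p * Gsurv Q True (tval n T0 k))"
    and "(\<integral>w. real (N0 n T1 T0 k w) \<partial>popM n p Q) = real (ncnt n T0 k) * ((1 - p) * Gsurv Q False (tval n T0 k))"
    and "measure (popM n p Q) {w \<in> space (popM n p Q). \<bar>real (N1 n T1 T0 k w) - real (ncnt n T0 k) * (p * Gsurv Q True (tval n T0 k))\<bar> \<ge> e}
           \<le> 2 * exp (-2 * e\<^sup>2 / real n)"
    and "measure (popM n p Q) {w \<in> space (popM n p Q). \<bar>real (N0 n T1 T0 k w) - real (ncnt n T0 k) * ((1 - p) * Gsurv Q False (tval n T0 k))\<bar> \<ge> e}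
           \<le> 2 * exp (-2 * e\<^sup>2 / real n)"
    and "measure (popM n p Q) {w \<in> space (popM n p Q). \<bar>real (Dk n T1 T0 k w) - real (dcnt n T0 k) * (p * Gsurv Q True (tval n T0 k) + (1 - p) * Gsurv Q False (tval n T0 k))\<bar> \<ge> e}
           \<le> 2 * exp (-2 * e\<^sup>2 / real n)"
    and "\<And>w. Dk n T1 T0 k w \<le> N1 n T1 T0 k w + N0 n T1 T0 k w"
    and "\<And>w. real (Dk n T1 T0 k w) \<le> real (dcnt n T0 k)"
    and "\<And>w. real (N1 n T1 T0 k w) + real (N0 n T1 T0 k w) - real (Dk n T1 T0 k w) \<le> real (ncnt n T0 k) - real (dcnt n T0 k)"
    and "\<And>w. real (N1 n T1 T0 k w) + real (N0 n T1 T0 k w) \<le> real n"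
proof -
  note m = model(1)[where n=n and Q=Q and p=p and ?T1.0=T1 and ?T0.0=T0 and e=e, OF n Q Qs p H0 e]
    model(2-17)[where n=n and Q=Q and p=p and ?T1.0=T1 and ?T0.0=T0 and e=e and k=k, OF n Q Qs p H0 e]
  have e1: "(\<lambda>w. real (N1 n T1 T0 k w)) = (\<lambda>w. \<Sum>i<n. indicator (if tval n T0 k \<le> T0 i then {x. fst x \<and> ereal (tval n T0 k) \<le> fst (snd x)} else {}) (w i))"
    using m(2) by (intro ext) simp
  have e0: "(\<lambda>w. real (N0 n T1 T0 k w)) = (\<lambda>w. \<Sum>i<n. indicator (if tval n T0 k \<le> T0 i then {x. \<not> fst x \<and> ereal (tval n T0 k) \<le> snd (snd x)} else {}) (w i))"
    using m(3) by (intro ext) simp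
  have eD: "(\<lambda>w. real (Dk n T1 T0 k w)) = (\<lambda>w. \<Sum>i<n. indicator (if T0 i = tval n T0 k then {x. ereal (tval n T0 k) \<le> (if fst x then fst (snd x) else snd (snd x))} else {}) (w i))"
    using m(4) by (intro ext) simp
  show "prob_space (popM n p Q)" by (rule m(1))
  show "(\<lambda>w. real (N1 n T1 T0 k w)) \<in> borel_measurable (popM n p Q)" unfolding e1 by (rule m(5))
  show "(\<lambda>w. real (N0 n T1 T0 k w)) \<in> borel_measurable (popM n p Q)" unfolding e0 by (rule m(6))
  show "(\<lambda>w. real (Dk n T1 T0 k w)) \<in> borel_measurable (popM n p Q)" unfolding eD by (rule m(7))
  show "(\<integral>w. real (N1 n T1 T0 k w) \<partial>popM n p Q) = real (ncnt n T0 k) * (p * Gsurv Q True (tval n T0 k))"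
    using m(8) by (simp only: m(2))
  show "(\<integral>w. real (N0 n T1 T0 k w) \<partial>popM n p Q) = real (ncnt n T0 k) * ((1 - p) * Gsurv Q False (tval n T0 k))"
    using m(9) by (simp only: m(3))
  show "measure (popM n p Q) {w \<in> space (popM n p Q). \<bar>real (N1 n T1 T0 k w) - real (ncnt n T0 k) * (p * Gsurv Q True (tval n T0 k))\<bar> \<ge> e}
           \<le> 2 * exp (-2 * e\<^sup>2 / real n)"
    using m(11) by (simp only: m(2))
  show "measure (popM n p Q) {w \<in> space (popM n p Q). \<bar>real (N0 n T1 T0 k w) - real (ncnt n T0 k) * ((1 - p) * Gsurv Q False (tval n T0 k))\<bar> \<ge> e}
           \<le> 2 * exp (-2 * e\<^sup>2 / real n)"
    using m(12) by (simp only: m(3))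
  show "measure (popM n p Q) {w \<in> space (popM n p Q). \<bar>real (Dk n T1 T0 k w) - real (dcnt n T0 k) * (p * Gsurv Q True (tval n T0 k) + (1 - p) * Gsurv Q False (tval n T0 k))\<bar> \<ge> e}
           \<le> 2 * exp (-2 * e\<^sup>2 / real n)"
    using m(13) by (simp only: m(4))
  fix w
  have triv: "\<And>i. i < n \<Longrightarrow> i < n" by simp
  have "real (Dk n T1 T0 k w) \<le> real (N1 n T1 T0 k w) + real (N0 n T1 T0 k w)"
    using m(14)[where w=w] by (simp only: m(2) m(3) m(4))
  then show "Dk n T1 T0 k w \<le> N1 n T1 T0 k w + N0 n T1 T0 k w" by linarith
  show "real (Dk n T1 T0 k w) \<le> real (dcnt n T0 k)" using m(15)[where w=w] by (simp only: m(4))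
  show "real (N1 n T1 T0 k w) + real (N0 n T1 T0 k w) - real (Dk n T1 T0 k w) \<le> real (ncnt n T0 k) - real (dcnt n T0 k)"
    using m(16)[where w=w] by (simp only: m(2) m(3) m(4))
  show "real (N1 n T1 T0 k w) + real (N0 n T1 T0 k w) \<le> real n"
    using m(17)[where w=w] by (simp only: m(2) m(3))
qed

lemma Vform_bounds:
  fixes a b d :: nat
  assumes dle: "d \<le> a + b"
  defines "N \<equiv> real a + real b"
  defines "V \<equiv> real d * (N - real d) * real a * real b / (N\<^sup>2 * (N - 1))"
  shows "0 \<le> V" "V \<le> real d" "V \<le> N - real d" "V \<le> real a" "V \<le> real b"
    "V > 0 \<Longrightarrow> V \<ge> 1 / (2 * N)"
proof -
  consider "d = 0 \<or> d = a + b \<or> a = 0 \<or> b = 0" | "d \<ge> 1" "d + 1 \<le> a + b" "a \<ge> 1" "b \<ge> 1"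
    using dle by linarith
  then have "(0 \<le> V \<and> V \<le> real d \<and> V \<le> N - real d \<and> V \<le> real a \<and> V \<le> real b) \<and> (V > 0 \<longrightarrow> V \<ge> 1 / (2 * N))"
  proof cases
    case 1
    then have "V = 0" unfolding V_def N_def by (auto simp: of_nat_add[symmetric] simp del: of_nat_add)
    then show ?thesis using dle unfolding N_def by auto
  next
    case 2
    define x where "x = real d"
    define y where "y = real a"
    define z where "z = real b"
    have x1: "x \<ge> 1" and y1: "y \<ge> 1" and z1: "z \<ge> 1" and xN: "x + 1 \<le> N"
      using 2 unfolding x_def y_def z_def N_def by (simp_all add: of_nat_add[symmetric] del: of_nat_add)
    have Nyz: "N = y + z" unfolding N_def y_def z_def by simp
    have N2: "N \<ge> 2" using y1 z1 Nyz by simp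
    have Veq: "V = (x * (N - x) / (N - 1)) * (y * z / N\<^sup>2)"
      unfolding V_def x_def y_def z_def by (simp add: field_simps)
    have A0: "x * (N - x) / (N - 1) \<ge> 0" using x1 xN by simp
    have B0: "y * z / N\<^sup>2 \<ge> 0" using y1 z1 by simp
    have B1: "y * z / N\<^sup>2 \<le> 1/4"
    proof -
      have "(y - z)\<^sup>2 \<ge> 0" by simp
      then have "4 * (y * z) \<le> N\<^sup>2" unfolding Nyz power2_eq_square by (simp add: algebra_simps)
      then show ?thesis using N2 by (simp add: field_simps)
    qed
    have Ax: "x * (N - x) / (N - 1) \<le> x"
    proof -
      have "x * (N - x) \<le> x * (N - 1)" using x1 xN by (intro mult_left_mono) auto
      then show ?thesis using N2 by (simp add: pos_divide_le_eq)
    qed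
    have AN: "x * (N - x) / (N - 1) \<le> N - x"
    proof -
      have "x * (N - x) \<le> (N - 1) * (N - x)" using x1 xN by (intro mult_right_mono) auto
      then show ?thesis using N2 by (simp add: pos_divide_le_eq mult.commute)
    qed
    have AL: "x * (N - x) / (N - 1) \<ge> 1"
    proof -
      have "(x - 1) * (N - x - 1) \<ge> 0" using x1 xN by simp
      then have "x * (N - x) \<ge> N - 1" by (simp add: algebra_simps)
      then show ?thesis using N2 by (simp add: field_simps)
    qed
    have BL: "y * z \<ge> N - 1"
    proof -
      have "(y - 1) * (z - 1) \<ge> 0" using y1 z1 by simp
      then show ?thesis unfolding Nyz by (simp add: algebra_simps)
    qed
    have "V \<ge> 0" unfolding Veq using A0 B0 by (rule mult_nonneg_nonneg)
    moreover have "V \<le> x"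
    proof -
      have "V \<le> x * (1/4)" unfolding Veq using Ax B1 A0 B0 x1 by (intro mult_mono) auto
      then show ?thesis using x1 by simp
    qed
    moreover have "V \<le> N - x"
    proof -
      have "V \<le> (N - x) * (1/4)" unfolding Veq using AN B1 A0 B0 xN by (intro mult_mono) auto
      then show ?thesis using xN by simp
    qed
    moreover have "V \<le> y"
    proof -
      have "x * (N - x) \<le> N\<^sup>2 / 4"
      proof -
        have "(2 * x - N)\<^sup>2 \<ge> 0" by simp
        then show ?thesis by (simp add: power2_eq_square algebra_simps)
      qed
      then have "x * (N - x) / (N - 1) \<le> (N\<^sup>2 / 4) / (N - 1)" using N2 by (intro divide_right_mono) auto
      then have "V \<le> (N\<^sup>2 / 4) / (N - 1) * (y * z / N\<^sup>2)" unfolding Veq by (rule mult_right_mono[OF _ B0])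
      also have "\<dots> = y * (z / (4 * (N - 1)))" using N2 by (simp add: field_simps power2_eq_square)
      also have "\<dots> \<le> y * 1" using y1 z1 N2 Nyz by (intro mult_left_mono) (simp_all add: field_simps)
      finally show ?thesis by simp
    qed
    moreover have "V \<le> z"
    proof -
      have "x * (N - x) \<le> N\<^sup>2 / 4"
      proof -
        have "(2 * x - N)\<^sup>2 \<ge> 0" by simp
        then show ?thesis by (simp add: power2_eq_square algebra_simps)
      qed
      then have "x * (N - x) / (N - 1) \<le> (N\<^sup>2 / 4) / (N - 1)" using N2 by (intro divide_right_mono) auto
      then have "V \<le> (N\<^sup>2 / 4) / (N - 1) * (y * z / N\<^sup>2)" unfolding Veq by (rule mult_right_mono[OF _ B0])
      also have "\<dots> = z * (y / (4 * (N - 1)))" using N2 by (simp add: field_simps power2_eq_square)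
      also have "\<dots> \<le> z * 1" using y1 z1 N2 Nyz by (intro mult_left_mono) (simp_all add: field_simps)
      finally show ?thesis by simp
    qed
    moreover have "V \<ge> 1 / (2 * N)"
    proof -
      have "V \<ge> 1 * ((N - 1) / N\<^sup>2)" unfolding Veq using AL BL N2
        by (intro mult_mono) (simp_all add: divide_right_mono)
      moreover have "(N - 1) / N\<^sup>2 \<ge> 1 / (2 * N)" using N2 by (simp add: field_simps power2_eq_square)
      ultimately show ?thesis by simp
    qed
    ultimately show ?thesis unfolding x_def y_def z_def by simp
  qed
  then show "0 \<le> V" "V \<le> real d" "V \<le> N - real d" "V \<le> real a" "V \<le> real b"
    "V > 0 \<Longrightarrow> V \<ge> 1 / (2 * N)" by auto
qed

definition Ff :: "real \<Rightarrow> real \<Rightarrow> real \<Rightarrow> real \<Rightarrow> real" where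
  "Ff u v d \<eta> = d * ((u + v) - d) * u * v / ((u + v)\<^sup>2 * ((u + v) - \<eta>))"

lemma dist_Pair_le: "dist (x, y) (x', y') \<le> dist x x' + dist y y'"
  unfolding dist_Pair_Pair using sqrt_sum_squares_le_sum_abs[of "dist x x'" "dist y y'"] by simp

lemma Fcont:
  fixes a1 a0 b e :: real
  assumes apos: "a1 + a0 > 0" and e: "e > 0"
  shows "\<exists>\<delta>>0. \<forall>u v d \<eta>. \<bar>u - a1\<bar> < \<delta> \<longrightarrow> \<bar>v - a0\<bar> < \<delta> \<longrightarrow> \<bar>d - b\<bar> < \<delta> \<longrightarrow> \<bar>\<eta>\<bar> < \<delta> \<longrightarrow>
            \<bar>Ff u v d \<eta> - Ff a1 a0 b 0\<bar> < e"
proof -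
  define G where "G = (\<lambda>z::real \<times> real \<times> real \<times> real. Ff (fst z) (fst (snd z)) (fst (snd (snd z))) (snd (snd (snd z))))"
  define a where "a = (a1, a0, b, 0::real)"
  have "isCont G a" unfolding G_def a_def Ff_def using apos
    by (intro continuous_intros) auto
  then obtain s where s: "s > 0" and hs: "\<And>x. x \<noteq> a \<and> dist x a < s \<Longrightarrow> dist (G x) (G a) < e"
    unfolding isCont_def using metric_LIM_D[where f=G and a=a and L="G a" and r=e] e by blast
  have "\<forall>u v d \<eta>. \<bar>u - a1\<bar> < s/4 \<longrightarrow> \<bar>v - a0\<bar> < s/4 \<longrightarrow> \<bar>d - b\<bar> < s/4 \<longrightarrow> \<bar>\<eta>\<bar> < s/4 \<longrightarrow>
            \<bar>Ff u v d \<eta> - Ff a1 a0 b 0\<bar> < e"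
  proof (intro allI impI)
    fix u v d \<eta> :: real
    assume h: "\<bar>u - a1\<bar> < s/4" "\<bar>v - a0\<bar> < s/4" "\<bar>d - b\<bar> < s/4" "\<bar>\<eta>\<bar> < s/4"
    show "\<bar>Ff u v d \<eta> - Ff a1 a0 b 0\<bar> < e"
    proof (cases "(u, v, d, \<eta>) = a")
      case True
      then show ?thesis using e unfolding a_def by simp
    next
      case False
      have "dist (u, v, d, \<eta>) a \<le> dist u a1 + (dist v a0 + (dist d b + dist \<eta> 0))"
        unfolding a_def
        by (meson add_left_mono order_trans dist_Pair_le)
      also have "\<dots> < s" using h by (simp add: dist_real_def)
      finally have "dist (G (u, v, d, \<eta>)) (G a) < e" using hs False by blast
      then show ?thesis unfolding G_def a_def dist_real_def by simp
    qed
  qed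
  moreover have "s / 4 > 0" using s by simp
  ultimately show ?thesis by blast
qed

lemma conc_main:
  fixes M :: "nat \<Rightarrow> 'a measure" and X1 X0 Y W :: "nat \<Rightarrow> 'a \<Rightarrow> real" and a1 a0 b :: "nat \<Rightarrow> real"
  assumes ev: "eventually (\<lambda>n. prob_space (M n) \<and> X1 n \<in> borel_measurable (M n) \<and>
      X0 n \<in> borel_measurable (M n) \<and> Y n \<in> borel_measurable (M n) \<and>
      (\<forall>e\<ge>0. measure (M n) {w\<in>space (M n). \<bar>X1 n w - a1 n\<bar> \<ge> e} \<le> 2 * exp (-2 * real n * e\<^sup>2)) \<and>
      (\<forall>e\<ge>0. measure (M n) {w\<in>space (M n). \<bar>X0 n w - a0 n\<bar> \<ge> e} \<le> 2 * exp (-2 * real n * e\<^sup>2)) \<and>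
      (\<forall>e\<ge>0. measure (M n) {w\<in>space (M n). \<bar>Y n w - b n\<bar> \<ge> e} \<le> 2 * exp (-2 * real n * e\<^sup>2)) \<and>
      (\<forall>w\<in>space (M n). W n w = Ff (X1 n w) (X0 n w) (Y n w) (1 / real n))) sequentially"
    and l1: "a1 \<longlonglongrightarrow> \<alpha>1" and l0: "a0 \<longlonglongrightarrow> \<alpha>0" and lb: "b \<longlonglongrightarrow> \<beta>" and apos: "\<alpha>1 + \<alpha>0 > 0"
    and eps: "\<epsilon> > 0"
  shows "\<exists>c>0. eventually (\<lambda>n. measure (M n) {w\<in>space (M n). \<bar>W n w - Ff \<alpha>1 \<alpha>0 \<beta> 0\<bar> \<ge> \<epsilon>}
            \<le> 6 * exp (-c * real n)) sequentially"
proof -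
  obtain \<delta> where d: "\<delta> > 0" and hd: "\<And>u v d \<eta>. \<bar>u - \<alpha>1\<bar> < \<delta> \<Longrightarrow> \<bar>v - \<alpha>0\<bar> < \<delta> \<Longrightarrow>
      \<bar>d - \<beta>\<bar> < \<delta> \<Longrightarrow> \<bar>\<eta>\<bar> < \<delta> \<Longrightarrow> \<bar>Ff u v d \<eta> - Ff \<alpha>1 \<alpha>0 \<beta> 0\<bar> < \<epsilon>"
    using Fcont[OF apos eps, of \<beta>] by blast
  have d2: "\<delta> / 2 > 0" using d by simp
  have e1: "eventually (\<lambda>n. \<bar>a1 n - \<alpha>1\<bar> < \<delta> / 2) sequentially"
    using tendstoD[OF l1 d2] by (simp add: dist_real_def)
  have e0: "eventually (\<lambda>n. \<bar>a0 n - \<alpha>0\<bar> < \<delta> / 2) sequentially"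
    using tendstoD[OF l0 d2] by (simp add: dist_real_def)
  have eb: "eventually (\<lambda>n. \<bar>b n - \<beta>\<bar> < \<delta> / 2) sequentially"
    using tendstoD[OF lb d2] by (simp add: dist_real_def)
  have en: "eventually (\<lambda>n. \<bar>1 / real n\<bar> < \<delta>) sequentially"
  proof -
    have "(\<lambda>n. 1 / real n) \<longlonglongrightarrow> 0" by (rule lim_1_over_n)
    from tendstoD[OF this d] show ?thesis by (simp add: dist_real_def)
  qed
  define c where "c = \<delta>\<^sup>2 / 2"
  have c: "c > 0" using d unfolding c_def by simp
  have "eventually (\<lambda>n. measure (M n) {w\<in>space (M n). \<bar>W n w - Ff \<alpha>1 \<alpha>0 \<beta> 0\<bar> \<ge> \<epsilon>}
            \<le> 6 * exp (-c * real n)) sequentially"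
    using ev e1 e0 eb en
  proof eventually_elim
    case (elim n)
    note el = elim(1)[THEN conjunct1] elim(1)[THEN conjunct2, THEN conjunct1]
      elim(1)[THEN conjunct2, THEN conjunct2, THEN conjunct1]
      elim(1)[THEN conjunct2, THEN conjunct2, THEN conjunct2, THEN conjunct1]
      elim(1)[THEN conjunct2, THEN conjunct2, THEN conjunct2, THEN conjunct2, THEN conjunct1]
      elim(1)[THEN conjunct2, THEN conjunct2, THEN conjunct2, THEN conjunct2, THEN conjunct2, THEN conjunct1]
      elim(1)[THEN conjunct2, THEN conjunct2, THEN conjunct2, THEN conjunct2, THEN conjunct2, THEN conjunct2, THEN conjunct1]
      elim(1)[THEN conjunct2, THEN conjunct2, THEN conjunct2, THEN conjunct2, THEN conjunct2, THEN conjunct2, THEN conjunct2]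
    interpret P: prob_space "M n" by (rule el(1))
    have m1[measurable]: "X1 n \<in> borel_measurable (M n)" and m0[measurable]: "X0 n \<in> borel_measurable (M n)"
      and mY[measurable]: "Y n \<in> borel_measurable (M n)" using el(2-4) by auto
    define A1 where "A1 = {w\<in>space (M n). \<bar>X1 n w - a1 n\<bar> \<ge> \<delta> / 2}"
    define A0 where "A0 = {w\<in>space (M n). \<bar>X0 n w - a0 n\<bar> \<ge> \<delta> / 2}"
    define AY where "AY = {w\<in>space (M n). \<bar>Y n w - b n\<bar> \<ge> \<delta> / 2}"
    have s1: "A1 \<in> P.events" unfolding A1_def by measurable
    have s0: "A0 \<in> P.events" unfolding A0_def by measurable
    have sY: "AY \<in> P.events" unfolding AY_def by measurable
    have sub: "{w\<in>space (M n). \<bar>W n w - Ff \<alpha>1 \<alpha>0 \<beta> 0\<bar> \<ge> \<epsilon>} \<subseteq> A1 \<union> A0 \<union> AY"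
    proof
      fix w assume w: "w \<in> {w\<in>space (M n). \<bar>W n w - Ff \<alpha>1 \<alpha>0 \<beta> 0\<bar> \<ge> \<epsilon>}"
      show "w \<in> A1 \<union> A0 \<union> AY"
      proof (rule ccontr)
        assume "w \<notin> A1 \<union> A0 \<union> AY"
        then have "\<bar>X1 n w - a1 n\<bar> < \<delta> / 2" "\<bar>X0 n w - a0 n\<bar> < \<delta> / 2" "\<bar>Y n w - b n\<bar> < \<delta> / 2"
          using w unfolding A1_def A0_def AY_def by auto
        then have "\<bar>X1 n w - \<alpha>1\<bar> < \<delta>" "\<bar>X0 n w - \<alpha>0\<bar> < \<delta>" "\<bar>Y n w - \<beta>\<bar> < \<delta>"
          using elim(2-4) by arith+
        then have "\<bar>Ff (X1 n w) (X0 n w) (Y n w) (1 / real n) - Ff \<alpha>1 \<alpha>0 \<beta> 0\<bar> < \<epsilon>"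
          using elim(5) by (intro hd) auto
        then show False using w el(8) by auto
      qed
    qed
    have "measure (M n) {w\<in>space (M n). \<bar>W n w - Ff \<alpha>1 \<alpha>0 \<beta> 0\<bar> \<ge> \<epsilon>} \<le> measure (M n) (A1 \<union> A0 \<union> AY)"
      using sub s1 s0 sY by (intro P.finite_measure_mono) auto
    also have "\<dots> \<le> measure (M n) (A1 \<union> A0) + measure (M n) AY"
      using s1 s0 sY by (intro measure_Un_le) auto
    also have "\<dots> \<le> measure (M n) A1 + measure (M n) A0 + measure (M n) AY"
      using s1 s0 measure_Un_le[of A1 "M n" A0] by auto
    also have "\<dots> \<le> 2 * exp (-2 * real n * (\<delta>/2)\<^sup>2) + 2 * exp (-2 * real n * (\<delta>/2)\<^sup>2) + 2 * exp (-2 * real n * (\<delta>/2)\<^sup>2)"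
      unfolding A1_def A0_def AY_def
      using el(5)[rule_format, of "\<delta>/2"] el(6)[rule_format, of "\<delta>/2"] el(7)[rule_format, of "\<delta>/2"] d2
      by (intro add_mono) simp_all
    also have "\<dots> = 6 * exp (-c * real n)"
    proof -
      have x: "-2 * real n * (\<delta>/2)\<^sup>2 = -c * real n" unfolding c_def by (simp add: power_divide)
      show ?thesis unfolding x by simp
    qed
    finally show ?case .
  qed
  then show ?thesis using c by blast
qed

lemma Ff_scale:
  fixes a b d n :: real
  assumes n: "n > 0"
  shows "Ff (a/n) (b/n) (d/n) (1/n) = (d * ((a + b) - d) * a * b / ((a + b)\<^sup>2 * ((a + b) - 1))) / n"
proof -
  have num: "d / n * ((a / n + b / n) - d / n) * (a / n) * (b / n) = (d * ((a + b) - d) * a * b) / n^4"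
    using n by (simp add: field_simps power4_eq_xxxx)
  have den: "(a / n + b / n)\<^sup>2 * ((a / n + b / n) - 1 / n) = ((a + b)\<^sup>2 * ((a + b) - 1)) / n^3"
    using n by (simp add: field_simps power2_eq_square power3_eq_cube)
  have F: "Ff (a/n) (b/n) (d/n) (1/n) = ((d * ((a + b) - d) * a * b) / n^4) / (((a + b)\<^sup>2 * ((a + b) - 1)) / n^3)"
    unfolding Ff_def num den ..
  have gen: "\<And>X Y. (X / n^4) / (Y / n^3) = (X / Y) / n"
    using n by (simp add: field_simps power4_eq_xxxx power3_eq_cube)
  show ?thesis unfolding F gen ..
qed

lemma Vk_props:
  assumes dle: "Dk n T1 T0 k w \<le> N1 n T1 T0 k w + N0 n T1 T0 k w"
    and Nle: "real (N1 n T1 T0 k w) + real (N0 n T1 T0 k w) \<le> real n" and n: "n > 0"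
  shows "0 \<le> Vk n T1 T0 k w" "Vk n T1 T0 k w \<le> real n"
    "Vk n T1 T0 k w > 0 \<Longrightarrow> Vk n T1 T0 k w \<ge> 1 / (2 * real n)"
    "Vk n T1 T0 k w \<le> real (Dk n T1 T0 k w)"
    "Vk n T1 T0 k w \<le> real (N1 n T1 T0 k w)"
    "Vk n T1 T0 k w \<le> real (N0 n T1 T0 k w)"
    "Vk n T1 T0 k w \<le> real (N1 n T1 T0 k w) + real (N0 n T1 T0 k w) - real (Dk n T1 T0 k w)"
    "Vk n T1 T0 k w / real n = Ff (real (N1 n T1 T0 k w) / real n) (real (N0 n T1 T0 k w) / real n)
        (real (Dk n T1 T0 k w) / real n) (1 / real n)"
proof -
  define a where "a = N1 n T1 T0 k w"
  define b where "b = N0 n T1 T0 k w"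
  define d where "d = Dk n T1 T0 k w"
  have Veq: "Vk n T1 T0 k w = real d * ((real a + real b) - real d) * real a * real b / ((real a + real b)\<^sup>2 * ((real a + real b) - 1))"
    unfolding Vk_def Let_def a_def b_def d_def ..
  note B = Vform_bounds[of d a b, OF dle[folded a_def b_def d_def], folded Veq]
  have Nle': "real a + real b \<le> real n" using Nle unfolding a_def b_def .
  show "0 \<le> Vk n T1 T0 k w" by (rule B(1))
  show "Vk n T1 T0 k w \<le> real (Dk n T1 T0 k w)" using B(2) unfolding d_def .
  show "Vk n T1 T0 k w \<le> real (N1 n T1 T0 k w)" using B(4) unfolding a_def .
  show "Vk n T1 T0 k w \<le> real (N0 n T1 T0 k w)" using B(5) unfolding b_def .
  show "Vk n T1 T0 k w \<le> real (N1 n T1 T0 k w) + real (N0 n T1 T0 k w) - real (Dk n T1 T0 k w)"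
    using B(3) unfolding a_def b_def d_def .
  show "Vk n T1 T0 k w \<le> real n" using B(4) Nle' by simp
  show "Vk n T1 T0 k w \<ge> 1 / (2 * real n)" if pos: "Vk n T1 T0 k w > 0"
  proof -
    have "real a > 0" using B(4) pos by simp
    then have Npos: "real a + real b > 0" by simp
    have "1 / (2 * real n) \<le> 1 / (2 * (real a + real b))" using Npos Nle'
      by (intro divide_left_mono mult_left_mono) auto
    also have "\<dots> \<le> Vk n T1 T0 k w" using B(6)[OF pos] .
    finally show ?thesis .
  qed
  show "Vk n T1 T0 k w / real n = Ff (real (N1 n T1 T0 k w) / real n) (real (N0 n T1 T0 k w) / real n)
        (real (Dk n T1 T0 k w) / real n) (1 / real n)"
    unfolding Ff_scale[of "real n", OF of_nat_0_less_iff[THEN iffD2, OF n]] Veq a_def b_def d_def ..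
qed

lemma conc_scale:
  fixes M :: "'a measure" and f :: "'a \<Rightarrow> real"
  assumes n: "n > 0" and h: "measure M {w\<in>space M. \<bar>f w - c\<bar> \<ge> real n * e} \<le> 2 * exp (-2 * (real n * e)\<^sup>2 / real n)"
  shows "measure M {w\<in>space M. \<bar>f w / real n - c / real n\<bar> \<ge> e} \<le> 2 * exp (-2 * real n * e\<^sup>2)"
proof -
  have "{w\<in>space M. \<bar>f w / real n - c / real n\<bar> \<ge> e} = {w\<in>space M. \<bar>f w - c\<bar> \<ge> real n * e}"
  proof -
    have "\<bar>x / real n - c / real n\<bar> \<ge> e \<longleftrightarrow> \<bar>x - c\<bar> \<ge> real n * e" for x
    proof -
      have "\<bar>x / real n - c / real n\<bar> = \<bar>x - c\<bar> / real n" using n by (simp add: diff_divide_distrib[symmetric])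
      then show ?thesis using n by (simp add: le_divide_eq mult.commute)
    qed
    then show ?thesis by auto
  qed
  moreover have "-2 * (real n * e)\<^sup>2 / real n = -2 * real n * e\<^sup>2" using n by (simp add: power2_eq_square)
  ultimately show ?thesis using h by simp
qed

lemma int_bound:
  fixes f g :: "'a \<Rightarrow> real"
  assumes P: "prob_space M" and f: "f \<in> borel_measurable M" and g: "g \<in> borel_measurable M"
    and b: "\<And>w. w \<in> space M \<Longrightarrow> 0 \<le> f w \<and> f w \<le> g w \<and> g w \<le> B"
  shows "(\<integral>w. f w \<partial>M) \<le> (\<integral>w. g w \<partial>M)"
proof -
  interpret P: prob_space M by (rule P)
  have gb: "\<bar>g w\<bar> \<le> B" "\<bar>f w\<bar> \<le> B" if "w \<in> space M" for w
  proof -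
    from b[OF that] have "0 \<le> f w" "f w \<le> g w" "g w \<le> B" by auto
    then show "\<bar>g w\<bar> \<le> B" "\<bar>f w\<bar> \<le> B" by auto
  qed
  have "integrable M f" by (rule P.integrable_const_bound[where B=B]) (use f gb in auto)
  moreover have "integrable M g"
    by (rule P.integrable_const_bound[where B=B]) (use g gb in auto)
  ultimately show ?thesis using b by (intro integral_mono) auto
qed

lemma abs_tri_aux: "\<bar>x - y\<bar> > (e::real) \<Longrightarrow> \<bar>y - z\<bar> < e/2 \<Longrightarrow> \<bar>x - z\<bar> \<ge> e/2"
  by arith

lemma sandwich0:
  fixes f g :: "nat \<Rightarrow> real"
  assumes "eventually (\<lambda>n. 0 \<le> f n \<and> f n \<le> g n) sequentially" "g \<longlonglongrightarrow> 0"
  shows "f \<longlonglongrightarrow> 0"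
  by (rule tendsto_sandwich[of "\<lambda>n. 0" f sequentially g]) (use assms in \<open>auto elim: eventually_mono\<close>)

lemma exp_decay1: "c > 0 \<Longrightarrow> (\<lambda>n. A * (6 * exp (-c * real n))) \<longlonglongrightarrow> (0::real)"
  by real_asymp

lemma exp_decay2: "c > 0 \<Longrightarrow> L > 0 \<Longrightarrow>
   (\<lambda>n. sqrt (2 / (L * real n)) + sqrt (2 * real n) * (6 * exp (-c * real n))) \<longlonglongrightarrow> (0::real)"
  by real_asymp

lemma final_pos:
  fixes M :: "nat \<Rightarrow> 'a measure" and V :: "nat \<Rightarrow> 'a \<Rightarrow> real" and L :: real
  assumes ev1: "eventually (\<lambda>n. prob_space (M n)) sequentially"
    and ev2: "eventually (\<lambda>n. V n \<in> borel_measurable (M n)) sequentially"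
    and ev3: "eventually (\<lambda>n. n > 0 \<and> (\<forall>w\<in>space (M n). 0 \<le> V n w \<and> V n w \<le> real n \<and>
                  (V n w > 0 \<longrightarrow> V n w \<ge> 1 / (2 * real n)))) sequentially"
    and conc: "\<And>\<epsilon>. \<epsilon> > 0 \<Longrightarrow> \<exists>c>0. eventually (\<lambda>n. measure (M n) {w\<in>space (M n). \<bar>V n w / real n - L\<bar> \<ge> \<epsilon>}
                  \<le> 6 * exp (-c * real n)) sequentially"
    and Lpos: "L > 0"
  shows "(\<lambda>n. (\<integral>w. V n w \<partial>M n) / real n) \<longlonglongrightarrow> L"
    and "\<And>e. e > 0 \<Longrightarrow> (\<lambda>n. measure (M n) {w \<in> space (M n).
               \<bar>V n w / real n - (\<integral>v. V n v \<partial>M n) / real n\<bar> > e}) \<longlonglongrightarrow> 0"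
    and "(\<lambda>n. \<integral>w. (if V n w > 0 then 1 / sqrt (V n w) else 0) \<partial>M n) \<longlonglongrightarrow> 0"
    and "(\<lambda>n. measure (M n) {w \<in> space (M n). V n w = 0}) \<longlonglongrightarrow> 0"
proof -
  have stepA: "\<exists>c>0. eventually (\<lambda>n. \<bar>(\<integral>w. V n w \<partial>M n) / real n - L\<bar> \<le> \<epsilon> + (1 + L) * (6 * exp (-c * real n))) sequentially"
    if eps: "\<epsilon> > 0" for \<epsilon>
  proof -
    obtain c where c: "c > 0" and evc: "eventually (\<lambda>n. measure (M n) {w\<in>space (M n). \<bar>V n w / real n - L\<bar> \<ge> \<epsilon>}
                  \<le> 6 * exp (-c * real n)) sequentially" using conc[OF eps] by blast
    have "eventually (\<lambda>n. \<bar>(\<integral>w. V n w \<partial>M n) / real n - L\<bar> \<le> \<epsilon> + (1 + L) * (6 * exp (-c * real n))) sequentially"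
      using ev1 ev2 ev3 evc
    proof eventually_elim
      case (elim n)
      interpret P: prob_space "M n" by (rule elim(1))
      have mV[measurable]: "V n \<in> borel_measurable (M n)" by (rule elim(2))
      have n0: "real n > 0" using elim(3) by simp
      have bnd: "\<And>w. w \<in> space (M n) \<Longrightarrow> 0 \<le> V n w \<and> V n w \<le> real n" using elim(3) by blast
      define A where "A = {w\<in>space (M n). \<bar>V n w / real n - L\<bar> \<ge> \<epsilon>}"
      have As[measurable]: "A \<in> P.events" unfolding A_def by measurable
        have intI: "integrable (M n) (indicator A :: 'a \<Rightarrow> real)" using As
          by (intro integrable_real_indicator) (auto simp: P.emeasure_finite less_top[symmetric])
      have intV: "integrable (M n) (V n)"
        by (rule P.integrable_const_bound[where B="real n"]) (use bnd in auto)
      have inth: "integrable (M n) (\<lambda>w. V n w / real n - L)" using intV by auto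
      have inth': "integrable (M n) (\<lambda>w. L - V n w / real n)" using intV by auto
      have intR: "integrable (M n) (\<lambda>w. \<epsilon> + (1 + L) * indicator A w)"
        using As by (intro Bochner_Integration.integrable_add integrable_mult_right integrable_real_indicator) (auto simp: P.emeasure_finite less_top[symmetric])
      have pw: "\<bar>V n w / real n - L\<bar> \<le> \<epsilon> + (1 + L) * indicator A w" if w: "w \<in> space (M n)" for w
      proof (cases "w \<in> A")
        case True
        have "0 \<le> V n w / real n" "V n w / real n \<le> 1" using bnd[OF w] n0 by auto
        then show ?thesis using True Lpos eps by (simp add: indicator_def abs_le_iff)
      next
        case False
        then show ?thesis using w unfolding A_def by (simp add: indicator_def)
      qed
      have RHS: "(\<integral>w. \<epsilon> + (1 + L) * indicator A w \<partial>M n) = \<epsilon> + (1 + L) * measure (M n) A"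
        using As by (subst Bochner_Integration.integral_add) (auto simp: P.prob_space Int_absorb2 sets.sets_into_space intI)
      have EV: "(\<integral>w. V n w \<partial>M n) / real n - L = (\<integral>w. V n w / real n - L \<partial>M n)"
        using intV by (subst Bochner_Integration.integral_diff) (auto simp: P.prob_space)
      have EV': "L - (\<integral>w. V n w \<partial>M n) / real n = (\<integral>w. L - V n w / real n \<partial>M n)"
        using intV by (subst Bochner_Integration.integral_diff) (auto simp: P.prob_space)
      have "(\<integral>w. V n w / real n - L \<partial>M n) \<le> (\<integral>w. \<epsilon> + (1 + L) * indicator A w \<partial>M n)"
        using inth intR pw by (intro integral_mono) (auto simp: abs_le_iff)
      moreover have "(\<integral>w. L - V n w / real n \<partial>M n) \<le> (\<integral>w. \<epsilon> + (1 + L) * indicator A w \<partial>M n)"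
        using inth' intR pw by (intro integral_mono) (auto simp: abs_le_iff)
      moreover have "(1 + L) * measure (M n) A \<le> (1 + L) * (6 * exp (-c * real n))"
        using elim(4) Lpos unfolding A_def by (intro mult_left_mono) auto
      ultimately show ?case unfolding RHS EV[symmetric] EV'[symmetric] by (simp add: abs_le_iff)
    qed
    then show ?thesis using c by blast
  qed
  show limA: "(\<lambda>n. (\<integral>w. V n w \<partial>M n) / real n) \<longlonglongrightarrow> L"
  proof (rule tendstoI)
    fix \<epsilon> :: real assume eps: "\<epsilon> > 0"
    then obtain c where c: "c > 0" and evc: "eventually (\<lambda>n. \<bar>(\<integral>w. V n w \<partial>M n) / real n - L\<bar> \<le> \<epsilon>/2 + (1 + L) * (6 * exp (-c * real n))) sequentially"
      using stepA[of "\<epsilon>/2"] by auto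
    have "eventually (\<lambda>n. (1 + L) * (6 * exp (-c * real n)) < \<epsilon>/2) sequentially"
      using eps by (intro order_tendstoD(2)[OF exp_decay1[OF c, of "1 + L"]]) simp
    with evc show "eventually (\<lambda>n. dist ((\<integral>w. V n w \<partial>M n) / real n) L < \<epsilon>) sequentially"
      by eventually_elim (simp add: dist_real_def)
  qed
  show "(\<lambda>n. measure (M n) {w \<in> space (M n).
               \<bar>V n w / real n - (\<integral>v. V n v \<partial>M n) / real n\<bar> > e}) \<longlonglongrightarrow> 0" if e: "e > 0" for e
  proof -
    obtain c where c: "c > 0" and evc: "eventually (\<lambda>n. measure (M n) {w\<in>space (M n). \<bar>V n w / real n - L\<bar> \<ge> e/2}
                  \<le> 6 * exp (-c * real n)) sequentially" using conc[of "e/2"] e by auto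
    have evE: "eventually (\<lambda>n. \<bar>(\<integral>w. V n w \<partial>M n) / real n - L\<bar> < e/2) sequentially"
      using tendstoD[OF limA, of "e/2"] e by (simp add: dist_real_def)
    show ?thesis
    proof (rule sandwich0[OF _ exp_decay1[OF c, of 1]])
      show "eventually (\<lambda>n. 0 \<le> measure (M n) {w \<in> space (M n).
               \<bar>V n w / real n - (\<integral>v. V n v \<partial>M n) / real n\<bar> > e} \<and>
           measure (M n) {w \<in> space (M n).
               \<bar>V n w / real n - (\<integral>v. V n v \<partial>M n) / real n\<bar> > e} \<le> 1 * (6 * exp (- c * real n))) sequentially"
        using ev1 ev2 evc evE
      proof eventually_elim
        case (elim n)
        interpret P: prob_space "M n" by (rule elim(1))
        have mV[measurable]: "V n \<in> borel_measurable (M n)" by (rule elim(2))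
        have "measure (M n) {w \<in> space (M n). \<bar>V n w / real n - (\<integral>v. V n v \<partial>M n) / real n\<bar> > e}
            \<le> measure (M n) {w\<in>space (M n). \<bar>V n w / real n - L\<bar> \<ge> e/2}"
        proof (rule P.finite_measure_mono)
          show "{w \<in> space (M n). \<bar>V n w / real n - (\<integral>v. V n v \<partial>M n) / real n\<bar> > e}
            \<subseteq> {w\<in>space (M n). \<bar>V n w / real n - L\<bar> \<ge> e/2}"
            using elim(4) abs_tri_aux by blast
          show "{w\<in>space (M n). \<bar>V n w / real n - L\<bar> \<ge> e/2} \<in> P.events" by measurable
        qed
        then show ?case using elim(3) by simp
      qed
    qed
  qed
  show "(\<lambda>n. measure (M n) {w \<in> space (M n). V n w = 0}) \<longlonglongrightarrow> 0"
  proof -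
    obtain c where c: "c > 0" and evc: "eventually (\<lambda>n. measure (M n) {w\<in>space (M n). \<bar>V n w / real n - L\<bar> \<ge> L/2}
                  \<le> 6 * exp (-c * real n)) sequentially" using conc[of "L/2"] Lpos by auto
    show ?thesis
    proof (rule sandwich0[OF _ exp_decay1[OF c, of 1]])
      show "eventually (\<lambda>n. 0 \<le> measure (M n) {w \<in> space (M n). V n w = 0} \<and>
           measure (M n) {w \<in> space (M n). V n w = 0} \<le> 1 * (6 * exp (- c * real n))) sequentially"
        using ev1 ev2 evc
      proof eventually_elim
        case (elim n)
        interpret P: prob_space "M n" by (rule elim(1))
        have mV[measurable]: "V n \<in> borel_measurable (M n)" by (rule elim(2))
        have "measure (M n) {w \<in> space (M n). V n w = 0}
            \<le> measure (M n) {w\<in>space (M n). \<bar>V n w / real n - L\<bar> \<ge> L/2}"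
        proof (rule P.finite_measure_mono)
          show "{w \<in> space (M n). V n w = 0} \<subseteq> {w\<in>space (M n). \<bar>V n w / real n - L\<bar> \<ge> L/2}"
            using Lpos by auto
          show "{w\<in>space (M n). \<bar>V n w / real n - L\<bar> \<ge> L/2} \<in> P.events" by measurable
        qed
        then show ?case using elim(3) by simp
      qed
    qed
  qed
  show "(\<lambda>n. \<integral>w. (if V n w > 0 then 1 / sqrt (V n w) else 0) \<partial>M n) \<longlonglongrightarrow> 0"
  proof -
    obtain c where c: "c > 0" and evc: "eventually (\<lambda>n. measure (M n) {w\<in>space (M n). \<bar>V n w / real n - L\<bar> \<ge> L/2}
                  \<le> 6 * exp (-c * real n)) sequentially" using conc[of "L/2"] Lpos by auto
    show ?thesis
    proof (rule sandwich0[OF _ exp_decay2[OF c Lpos]])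
      show "eventually (\<lambda>n. 0 \<le> (\<integral>w. (if V n w > 0 then 1 / sqrt (V n w) else 0) \<partial>M n) \<and>
           (\<integral>w. (if V n w > 0 then 1 / sqrt (V n w) else 0) \<partial>M n)
             \<le> sqrt (2 / (L * real n)) + sqrt (2 * real n) * (6 * exp (-c * real n))) sequentially"
        using ev1 ev2 ev3 evc
      proof eventually_elim
        case (elim n)
        interpret P: prob_space "M n" by (rule elim(1))
        have mV[measurable]: "V n \<in> borel_measurable (M n)" by (rule elim(2))
        have n0: "real n > 0" using elim(3) by simp
        have bnd: "\<And>w. w \<in> space (M n) \<Longrightarrow> 0 \<le> V n w \<and> V n w \<le> real n \<and> (V n w > 0 \<longrightarrow> V n w \<ge> 1 / (2 * real n))"
          using elim(3) by blast
        define A where "A = {w\<in>space (M n). \<bar>V n w / real n - L\<bar> \<ge> L/2}"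
        have As[measurable]: "A \<in> P.events" unfolding A_def by measurable
        have intI: "integrable (M n) (indicator A :: 'a \<Rightarrow> real)" using As
          by (intro integrable_real_indicator) (auto simp: P.emeasure_finite less_top[symmetric])
        define g where "g = (\<lambda>w. if V n w > 0 then 1 / sqrt (V n w) else 0)"
        have gm[measurable]: "g \<in> borel_measurable (M n)" unfolding g_def by measurable
        have gle: "g w \<le> sqrt (2 * real n)" if w: "w \<in> space (M n)" for w
        proof (cases "V n w > 0")
          case True
          then have "V n w \<ge> 1 / (2 * real n)" using bnd[OF w] by blast
          then have "sqrt (V n w) \<ge> sqrt (1 / (2 * real n))" by simp
          then have "1 / sqrt (V n w) \<le> 1 / sqrt (1 / (2 * real n))" using n0 True
            by (intro divide_left_mono) auto
          then show ?thesis using True n0 unfolding g_def by (simp add: real_sqrt_divide)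
        qed (simp add: g_def)
        have g0: "g w \<ge> 0" for w unfolding g_def by simp
        have intg: "integrable (M n) g"
          by (rule P.integrable_const_bound[where B="sqrt (2 * real n)"]) (use gle g0 in auto)
        have intR: "integrable (M n) (\<lambda>w. sqrt (2 / (L * real n)) + sqrt (2 * real n) * indicator A w)"
          using As by (intro Bochner_Integration.integrable_add integrable_mult_right integrable_real_indicator) (auto simp: P.emeasure_finite less_top[symmetric])
        have pw: "g w \<le> sqrt (2 / (L * real n)) + sqrt (2 * real n) * indicator A w" if w: "w \<in> space (M n)" for w
        proof (cases "w \<in> A")
          case True
          have "sqrt (2 / (L * real n)) \<ge> 0" using Lpos n0 by simp
          then have "g w \<le> sqrt (2 / (L * real n)) + sqrt (2 * real n)" using gle[OF w] by linarith
          then show ?thesis using True by (simp add: indicator_def)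
        next
          case False
          show ?thesis
          proof (cases "V n w > 0")
            case True
            have "\<bar>V n w / real n - L\<bar> < L / 2" using False w unfolding A_def by auto
            then have "V n w / real n > L / 2" by arith
            then have "V n w > L * real n / 2" using n0 by (simp add: field_simps)
            then have "sqrt (V n w) > sqrt (L * real n / 2)" by simp
            then have "1 / sqrt (V n w) < 1 / sqrt (L * real n / 2)" using Lpos n0 True
              by (intro divide_strict_left_mono) auto
            also have "1 / sqrt (L * real n / 2) = sqrt (2 / (L * real n))"
              by (simp add: real_sqrt_divide)
            finally show ?thesis using True False unfolding g_def by simp
          qed (use Lpos n0 in \<open>auto simp: g_def indicator_def\<close>)
        qed
        have RHS: "(\<integral>w. sqrt (2 / (L * real n)) + sqrt (2 * real n) * indicator A w \<partial>M n)
            = sqrt (2 / (L * real n)) + sqrt (2 * real n) * measure (M n) A"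
          using As by (subst Bochner_Integration.integral_add) (auto simp: P.prob_space Int_absorb2 sets.sets_into_space intI)
        have "(\<integral>w. g w \<partial>M n) \<le> sqrt (2 / (L * real n)) + sqrt (2 * real n) * measure (M n) A"
          unfolding RHS[symmetric] using intg intR pw by (intro integral_mono) auto
        also have "\<dots> \<le> sqrt (2 / (L * real n)) + sqrt (2 * real n) * (6 * exp (-c * real n))"
          using elim(4) unfolding A_def by (intro add_left_mono mult_left_mono) auto
        finally show ?case using g0 unfolding g_def by auto
      qed
    qed
  qed
qed

lemma final_zero:
  fixes M :: "nat \<Rightarrow> 'a measure" and V :: "nat \<Rightarrow> 'a \<Rightarrow> real" and r :: "nat \<Rightarrow> real"
  assumes ev1: "eventually (\<lambda>n. prob_space (M n)) sequentially"
    and ev2: "eventually (\<lambda>n. V n \<in> borel_measurable (M n)) sequentially"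
    and ev3: "eventually (\<lambda>n. n > 0 \<and> (\<forall>w\<in>space (M n). 0 \<le> V n w \<and> V n w \<le> real n)) sequentially"
    and ev4: "eventually (\<lambda>n. (\<integral>w. V n w \<partial>M n) / real n \<le> r n) sequentially"
    and r: "r \<longlonglongrightarrow> 0"
  shows "(\<lambda>n. (\<integral>w. V n w \<partial>M n) / real n) \<longlonglongrightarrow> 0"
    and "\<And>e. e > 0 \<Longrightarrow> (\<lambda>n. measure (M n) {w \<in> space (M n). \<bar>V n w / real n\<bar> > e}) \<longlonglongrightarrow> 0"
proof -
  show "(\<lambda>n. (\<integral>w. V n w \<partial>M n) / real n) \<longlonglongrightarrow> 0"
  proof (rule sandwich0[OF _ r])
    show "eventually (\<lambda>n. 0 \<le> (\<integral>w. V n w \<partial>M n) / real n \<and> (\<integral>w. V n w \<partial>M n) / real n \<le> r n) sequentially"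
      using ev3 ev4 by eventually_elim auto
  qed
  show "(\<lambda>n. measure (M n) {w \<in> space (M n). \<bar>V n w / real n\<bar> > e}) \<longlonglongrightarrow> 0" if e: "e > 0" for e
  proof (rule sandwich0)
    show "(\<lambda>n. r n / e) \<longlonglongrightarrow> 0" using tendsto_divide[OF r tendsto_const, of e] e by simp
    show "eventually (\<lambda>n. 0 \<le> measure (M n) {w \<in> space (M n). \<bar>V n w / real n\<bar> > e} \<and>
        measure (M n) {w \<in> space (M n). \<bar>V n w / real n\<bar> > e} \<le> r n / e) sequentially"
      using ev1 ev2 ev3 ev4
    proof eventually_elim
      case (elim n)
      interpret P: prob_space "M n" by (rule elim(1))
      have mV[measurable]: "V n \<in> borel_measurable (M n)" by (rule elim(2))
      have n0: "real n > 0" using elim(3) by simp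
      have bnd: "\<And>w. w \<in> space (M n) \<Longrightarrow> 0 \<le> V n w \<and> V n w \<le> real n" using elim(3) by blast
      have intV: "integrable (M n) (V n)"
        by (rule P.integrable_const_bound[where B="real n"]) (use bnd in auto)
      have intV': "integrable (M n) (\<lambda>w. V n w / real n)" using intV by auto
      have "measure (M n) {w \<in> space (M n). \<bar>V n w / real n\<bar> > e}
          \<le> measure (M n) {w \<in> space (M n). V n w / real n \<ge> e}"
      proof (rule P.finite_measure_mono)
        show "{w \<in> space (M n). \<bar>V n w / real n\<bar> > e} \<subseteq> {w \<in> space (M n). V n w / real n \<ge> e}"
          using bnd n0 by auto
        show "{w \<in> space (M n). V n w / real n \<ge> e} \<in> P.events" by measurable
      qed
      also have "\<dots> \<le> (\<integral>w. V n w / real n \<partial>M n) / e"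
        using intV' e bnd n0 by (intro integral_Markov_inequality_measure[where A="space (M n)"]) auto
      also have "\<dots> = ((\<integral>w. V n w \<partial>M n) / real n) / e" by simp
      also have "\<dots> \<le> r n / e" using elim(4) e by (intro divide_right_mono) auto
      finally show ?case by simp
    qed
  qed
qed

lemma ncnt_sum:
  fixes T0 :: "nat \<Rightarrow> real"
  assumes card: "card (T0 ` {..<n}) = K" and k: "1 \<le> k" "k \<le> K"
  shows "ncnt n T0 k = (\<Sum>j\<in>{k..K}. dcnt n T0 j)"
proof -
  define xs where "xs = sorted_list_of_set (T0 ` {..<n})"
  have len: "length xs = K" unfolding xs_def using card by simp
  have sxs: "set xs = T0 ` {..<n}" unfolding xs_def by simp
  have srt: "sorted xs" and dst: "distinct xs" unfolding xs_def by simp_all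
  have tv: "tval n T0 j = xs ! (j - 1)" for j unfolding tval_def xs_def ..
  have eq: "{i. i < n \<and> T0 i \<ge> tval n T0 k} = (\<Union>j\<in>{k..K}. {i. i < n \<and> T0 i = tval n T0 j})"
  proof (intro equalityI subsetI)
    fix i assume i: "i \<in> {i. i < n \<and> T0 i \<ge> tval n T0 k}"
    then have "T0 i \<in> set xs" using sxs by auto
    then obtain q where q: "q < K" "xs ! q = T0 i" using len by (metis in_set_conv_nth)
    have "q \<ge> k - 1"
    proof (rule ccontr)
      assume "\<not> q \<ge> k - 1"
      then have "q < k - 1" by simp
      then have "xs ! q \<le> xs ! (k - 1)" "xs ! q \<noteq> xs ! (k - 1)"
        using srt dst len k by (auto simp: sorted_nth_mono nth_eq_iff_index_eq)
      then show False using i q tv by auto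
    qed
    then have "Suc q \<in> {k..K}" using q k by auto
    moreover have "i \<in> {i. i < n \<and> T0 i = tval n T0 (Suc q)}" using i q tv by auto
    ultimately show "i \<in> (\<Union>j\<in>{k..K}. {i. i < n \<and> T0 i = tval n T0 j})" by blast
  next
    fix i assume "i \<in> (\<Union>j\<in>{k..K}. {i. i < n \<and> T0 i = tval n T0 j})"
    then obtain j where j: "j \<in> {k..K}" "i < n" "T0 i = tval n T0 j" by auto
    have "xs ! (k - 1) \<le> xs ! (j - 1)" using srt len j k by (intro sorted_nth_mono) auto
    then show "i \<in> {i. i < n \<and> T0 i \<ge> tval n T0 k}" using j tv by auto
  qed
  have "card (\<Union>j\<in>{k..K}. {i. i < n \<and> T0 i = tval n T0 j}) = (\<Sum>j\<in>{k..K}. card {i. i < n \<and> T0 i = tval n T0 j})"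
  proof (rule card_UN_disjoint)
    show "\<forall>j\<in>{k..K}. \<forall>j'\<in>{k..K}. j \<noteq> j' \<longrightarrow> {i. i < n \<and> T0 i = tval n T0 j} \<inter> {i. i < n \<and> T0 i = tval n T0 j'} = {}"
    proof (intro ballI impI)
      fix j j' assume jj: "j \<in> {k..K}" "j' \<in> {k..K}" "j \<noteq> j'"
      then have "xs ! (j - 1) \<noteq> xs ! (j' - 1)" using dst len k by (auto simp: nth_eq_iff_index_eq)
      then show "{i. i < n \<and> T0 i = tval n T0 j} \<inter> {i. i < n \<and> T0 i = tval n T0 j'} = {}" using tv by auto
    qed
  qed auto
  then show ?thesis unfolding ncnt_def dcnt_def eq .
qed

lemma dcnt_le_ncnt: "dcnt n T0 k \<le> ncnt n T0 k"
  unfolding dcnt_def ncnt_def by (intro card_mono) auto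

lemma model3:
  fixes p1 :: "nat \<Rightarrow> real" and T1 T0 :: "nat \<Rightarrow> nat \<Rightarrow> real" and Q :: "nat \<Rightarrow> (ereal \<times> ereal) measure"
  assumes n: "n > 0" and p1: "\<forall>n. 0 < p1 n \<and> p1 n < 1"
    and Qprob: "\<forall>n. prob_space (Q n)"
    and Qsets: "\<forall>n. sets (Q n) = sets borel"
    and H0: "\<forall>n i. i < n \<longrightarrow> T1 n i = T0 n i"
  shows "prob_space (popM n (p1 n) (Q n))"
    and "(\<lambda>w. real (N1 n (T1 n) (T0 n) k w)) \<in> borel_measurable (popM n (p1 n) (Q n))"
    and "(\<lambda>w. real (N0 n (T1 n) (T0 n) k w)) \<in> borel_measurable (popM n (p1 n) (Q n))"
    and "(\<lambda>w. real (Dk n (T1 n) (T0 n) k w)) \<in> borel_measurable (popM n (p1 n) (Q n))"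
    and "(\<integral>w. real (N1 n (T1 n) (T0 n) k w) \<partial>popM n (p1 n) (Q n)) = real (ncnt n (T0 n) k) * (p1 n * Gsurv (Q n) True (tval n (T0 n) k))"
    and "(\<integral>w. real (N0 n (T1 n) (T0 n) k w) \<partial>popM n (p1 n) (Q n)) = real (ncnt n (T0 n) k) * ((1 - p1 n) * Gsurv (Q n) False (tval n (T0 n) k))"
    and "e \<ge> 0 \<Longrightarrow> measure (popM n (p1 n) (Q n)) {w \<in> space (popM n (p1 n) (Q n)). \<bar>real (N1 n (T1 n) (T0 n) k w) - real (ncnt n (T0 n) k) * (p1 n * Gsurv (Q n) True (tval n (T0 n) k))\<bar> \<ge> e}
           \<le> 2 * exp (-2 * e\<^sup>2 / real n)"
    and "e \<ge> 0 \<Longrightarrow> measure (popM n (p1 n) (Q n)) {w \<in> space (popM n (p1 n) (Q n)). \<bar>real (N0 n (T1 n) (T0 n) k w) - real (ncnt n (T0 n) k) * ((1 - p1 n) * Gsurv (Q n) False (tval n (T0 n) k))\<bar> \<ge> e}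
           \<le> 2 * exp (-2 * e\<^sup>2 / real n)"
    and "e \<ge> 0 \<Longrightarrow> measure (popM n (p1 n) (Q n)) {w \<in> space (popM n (p1 n) (Q n)). \<bar>real (Dk n (T1 n) (T0 n) k w) - real (dcnt n (T0 n) k) * (p1 n * Gsurv (Q n) True (tval n (T0 n) k) + (1 - p1 n) * Gsurv (Q n) False (tval n (T0 n) k))\<bar> \<ge> e}
           \<le> 2 * exp (-2 * e\<^sup>2 / real n)"
    and "\<And>w. Dk n (T1 n) (T0 n) k w \<le> N1 n (T1 n) (T0 n) k w + N0 n (T1 n) (T0 n) k w"
    and "\<And>w. real (Dk n (T1 n) (T0 n) k w) \<le> real (dcnt n (T0 n) k)"
    and "\<And>w. real (N1 n (T1 n) (T0 n) k w) + real (N0 n (T1 n) (T0 n) k w) - real (Dk n (T1 n) (T0 n) k w) \<le> real (ncnt n (T0 n) k) - real (dcnt n (T0 n) k)"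
    and "\<And>w. real (N1 n (T1 n) (T0 n) k w) + real (N0 n (T1 n) (T0 n) k w) \<le> real n"
proof -
  have Q: "prob_space (Q n)" and Qs: "sets (Q n) = sets borel" and p: "0 \<le> p1 n" "p1 n \<le> 1"
    and H: "\<And>i. i < n \<Longrightarrow> T1 n i = T0 n i" using Qprob Qsets p1 H0 by (auto simp: less_imp_le)
  have z: "(0::real) \<le> 0" by simp
  note m = model2(1)[where n=n and Q="Q n" and p="p1 n" and ?T1.0="T1 n" and ?T0.0="T0 n" and e=0, OF n Q Qs p H z]
    model2(2-13)[where n=n and Q="Q n" and p="p1 n" and ?T1.0="T1 n" and ?T0.0="T0 n" and e=0 and k=k, OF n Q Qs p H z]
  show "prob_space (popM n (p1 n) (Q n))" by (rule m(1))
  show "(\<lambda>w. real (N1 n (T1 n) (T0 n) k w)) \<in> borel_measurable (popM n (p1 n) (Q n))" by (rule m(2))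
  show "(\<lambda>w. real (N0 n (T1 n) (T0 n) k w)) \<in> borel_measurable (popM n (p1 n) (Q n))" by (rule m(3))
  show "(\<lambda>w. real (Dk n (T1 n) (T0 n) k w)) \<in> borel_measurable (popM n (p1 n) (Q n))" by (rule m(4))
  show "(\<integral>w. real (N1 n (T1 n) (T0 n) k w) \<partial>popM n (p1 n) (Q n)) = real (ncnt n (T0 n) k) * (p1 n * Gsurv (Q n) True (tval n (T0 n) k))" by (rule m(5))
  show "(\<integral>w. real (N0 n (T1 n) (T0 n) k w) \<partial>popM n (p1 n) (Q n)) = real (ncnt n (T0 n) k) * ((1 - p1 n) * Gsurv (Q n) False (tval n (T0 n) k))" by (rule m(6))
  show "\<And>w. Dk n (T1 n) (T0 n) k w \<le> N1 n (T1 n) (T0 n) k w + N0 n (T1 n) (T0 n) k w" by (rule m(10))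
  show "\<And>w. real (Dk n (T1 n) (T0 n) k w) \<le> real (dcnt n (T0 n) k)" by (rule m(11))
  show "\<And>w. real (N1 n (T1 n) (T0 n) k w) + real (N0 n (T1 n) (T0 n) k w) - real (Dk n (T1 n) (T0 n) k w) \<le> real (ncnt n (T0 n) k) - real (dcnt n (T0 n) k)" by (rule m(12))
  show "\<And>w. real (N1 n (T1 n) (T0 n) k w) + real (N0 n (T1 n) (T0 n) k w) \<le> real n" by (rule m(13))
  assume e: "e \<ge> 0"
  note me = model2(7-9)[where n=n and Q="Q n" and p="p1 n" and ?T1.0="T1 n" and ?T0.0="T0 n" and e=e and k=k, OF n Q Qs p H e]
  show "measure (popM n (p1 n) (Q n)) {w \<in> space (popM n (p1 n) (Q n)). \<bar>real (N1 n (T1 n) (T0 n) k w) - real (ncnt n (T0 n) k) * (p1 n * Gsurv (Q n) True (tval n (T0 n) k))\<bar> \<ge> e}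
           \<le> 2 * exp (-2 * e\<^sup>2 / real n)" by (rule me(1))
  show "measure (popM n (p1 n) (Q n)) {w \<in> space (popM n (p1 n) (Q n)). \<bar>real (N0 n (T1 n) (T0 n) k w) - real (ncnt n (T0 n) k) * ((1 - p1 n) * Gsurv (Q n) False (tval n (T0 n) k))\<bar> \<ge> e}
           \<le> 2 * exp (-2 * e\<^sup>2 / real n)" by (rule me(2))
  show "measure (popM n (p1 n) (Q n)) {w \<in> space (popM n (p1 n) (Q n)). \<bar>real (Dk n (T1 n) (T0 n) k w) - real (dcnt n (T0 n) k) * (p1 n * Gsurv (Q n) True (tval n (T0 n) k) + (1 - p1 n) * Gsurv (Q n) False (tval n (T0 n) k))\<bar> \<ge> e}
           \<le> 2 * exp (-2 * e\<^sup>2 / real n)" by (rule me(3))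
qed

theorem lemmaA16:
  fixes p1 :: "nat \<Rightarrow> real"
    and T1 T0 :: "nat \<Rightarrow> nat \<Rightarrow> real"
    and Q :: "nat \<Rightarrow> (ereal \<times> ereal) measure"
    and K :: nat
  assumes p1: "\<forall>n. 0 < p1 n \<and> p1 n < 1"
    and Qprob: "\<forall>n. prob_space (Q n)"
    and Qsets: "\<forall>n. sets (Q n) = sets borel"
    and Qnonneg: "\<forall>n. AE c in Q n. 0 \<le> fst c \<and> 0 \<le> snd c"
    and Tnonneg: "\<forall>n i. i < n \<longrightarrow> 0 \<le> T1 n i \<and> 0 \<le> T0 n i"
    and H0: "\<forall>n i. i < n \<longrightarrow> T1 n i = T0 n i"
    and cond2: "condition2 p1 T0 Q K"
  shows "\<forall>k\<in>{1..K}.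
     (k \<in> Kzero T0 Q K \<longrightarrow>
        (\<exists>L>0. (\<lambda>n. (\<integral>w. Vk n (T1 n) (T0 n) k w \<partial>popM n (p1 n) (Q n)) / real n) \<longlonglongrightarrow> L) \<and>
        (\<forall>e>0. (\<lambda>n. measure (popM n (p1 n) (Q n))
            {w \<in> space (popM n (p1 n) (Q n)).
               \<bar>Vk n (T1 n) (T0 n) k w / real n
                - (\<integral>v. Vk n (T1 n) (T0 n) k v \<partial>popM n (p1 n) (Q n)) / real n\<bar> > e})
          \<longlonglongrightarrow> 0) \<and>
        (\<lambda>n. \<integral>w. (if Vk n (T1 n) (T0 n) k w > 0 then 1 / sqrt (Vk n (T1 n) (T0 n) k w) else 0)
              \<partial>popM n (p1 n) (Q n)) \<longlonglongrightarrow> 0 \<and>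
        (\<lambda>n. measure (popM n (p1 n) (Q n))
            {w \<in> space (popM n (p1 n) (Q n)). Vk n (T1 n) (T0 n) k w = 0}) \<longlonglongrightarrow> 0) \<and>
     (k \<notin> Kzero T0 Q K \<longrightarrow>
        (\<lambda>n. (\<integral>w. Vk n (T1 n) (T0 n) k w \<partial>popM n (p1 n) (Q n)) / real n) \<longlonglongrightarrow> 0 \<and>
        (\<forall>e>0. (\<lambda>n. measure (popM n (p1 n) (Q n))
            {w \<in> space (popM n (p1 n) (Q n)). \<bar>Vk n (T1 n) (T0 n) k w / real n\<bar> > e})
          \<longlonglongrightarrow> 0))"

proof (intro ballI)
  fix k assume kK: "k \<in> {1..K}"
  have evK: "\<forall>\<^sub>F n in sequentially. card (T0 n ` {..<n}) = K"
    and pconv: "\<exists>a>0. p1 \<longlonglongrightarrow> a" and qconv: "\<exists>a>0. (\<lambda>n. 1 - p1 n) \<longlonglongrightarrow> a"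
    and convs: "\<forall>k\<in>{1..K}. convergent (\<lambda>n. real (dcnt n (T0 n) k) / real n) \<and>
        convergent (\<lambda>n. Gsurv (Q n) True (tval n (T0 n) k)) \<and>
        convergent (\<lambda>n. Gsurv (Q n) False (tval n (T0 n) k))"
    using cond2 unfolding condition2_def by blast+
  obtain pl where pl: "pl > 0" "p1 \<longlonglongrightarrow> pl" using pconv by blast
  obtain ql where ql: "ql > 0" "(\<lambda>n. 1 - p1 n) \<longlonglongrightarrow> ql" using qconv by blast
  define dl where "dl = (\<lambda>j. lim (\<lambda>n. real (dcnt n (T0 n) j) / real n))"
  have dlim: "(\<lambda>n. real (dcnt n (T0 n) j) / real n) \<longlonglongrightarrow> dl j" if "j \<in> {1..K}" for j
    using convs that unfolding dl_def by (simp add: convergent_LIMSEQ_iff)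
  have dl0: "dl j \<ge> 0" if "j \<in> {1..K}" for j
    by (rule tendsto_lowerbound[OF dlim[OF that]]) auto
  define G1 where "G1 = (\<lambda>n. Gsurv (Q n) True (tval n (T0 n) k))"
  define G0 where "G0 = (\<lambda>n. Gsurv (Q n) False (tval n (T0 n) k))"
  define g1 where "g1 = lim G1"
  define g0 where "g0 = lim G0"
  have g1lim: "G1 \<longlonglongrightarrow> g1" using convs kK unfolding g1_def G1_def by (simp add: convergent_LIMSEQ_iff)
  have g0lim: "G0 \<longlonglongrightarrow> g0" using convs kK unfolding g0_def G0_def by (simp add: convergent_LIMSEQ_iff)
  have g10: "g1 \<ge> 0" by (rule tendsto_lowerbound[OF g1lim]) (auto simp: G1_def Gsurv_def)
  have g00: "g0 \<ge> 0" by (rule tendsto_lowerbound[OF g0lim]) (auto simp: G0_def Gsurv_def)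
  define m where "m = (\<Sum>j\<in>{k..K}. dl j)"
  have nlim: "(\<lambda>n. real (ncnt n (T0 n) k) / real n) \<longlonglongrightarrow> m"
  proof -
    have l1: "(\<lambda>n. \<Sum>j\<in>{k..K}. real (dcnt n (T0 n) j) / real n) \<longlonglongrightarrow> m"
      unfolding m_def using kK by (intro tendsto_sum dlim) auto
    have e1: "eventually (\<lambda>n. (\<Sum>j\<in>{k..K}. real (dcnt n (T0 n) j) / real n) = real (ncnt n (T0 n) k) / real n) sequentially"
      using evK
    proof eventually_elim
      case (elim n)
      show ?case using ncnt_sum[OF elim, of k] kK by (simp add: sum_divide_distrib)
    qed
    show ?thesis using tendsto_cong[OF e1] l1 by blast
  qed
  have mge: "dl k \<le> m" unfolding m_def using kK dl0 by (intro member_le_sum) auto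
  have dk0: "dl k \<ge> 0" using dl0 kK by simp
  define M where "M = (\<lambda>n. popM n (p1 n) (Q n))"
  define V where "V = (\<lambda>n w. Vk n (T1 n) (T0 n) k w)"
  note mod = model3(1)[OF _ p1 Qprob Qsets H0] model3(2-13)[OF _ p1 Qprob Qsets H0, where k=k]
  have ev0: "eventually (\<lambda>n. n > (0::nat)) sequentially" by (rule eventually_gt_at_top)
  have Vp: "0 \<le> V n w \<and> V n w \<le> real n \<and> (V n w > 0 \<longrightarrow> V n w \<ge> 1 / (2 * real n)) \<and>
      V n w \<le> real (dcnt n (T0 n) k) \<and> V n w \<le> real (N1 n (T1 n) (T0 n) k w) \<and>
      V n w \<le> real (N0 n (T1 n) (T0 n) k w) \<and>
      V n w \<le> real (ncnt n (T0 n) k) - real (dcnt n (T0 n) k) \<and>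
      V n w / real n = Ff (real (N1 n (T1 n) (T0 n) k w) / real n) (real (N0 n (T1 n) (T0 n) k w) / real n)
        (real (Dk n (T1 n) (T0 n) k w) / real n) (1 / real n)" if n: "n > 0" for n w
  proof -
    note vp = Vk_props[OF mod(10)[OF n] mod(13)[OF n] n, where w=w]
    show ?thesis unfolding V_def using vp mod(11)[OF n, where w=w] mod(12)[OF n, where w=w] by linarith
  qed
  have Vmeas: "V n \<in> borel_measurable (M n)" if n: "n > 0" for n
  proof -
    have [measurable]: "(\<lambda>w. real (N1 n (T1 n) (T0 n) k w)) \<in> borel_measurable (M n)"
      "(\<lambda>w. real (N0 n (T1 n) (T0 n) k w)) \<in> borel_measurable (M n)"
      "(\<lambda>w. real (Dk n (T1 n) (T0 n) k w)) \<in> borel_measurable (M n)"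
      using mod(2-4)[OF n] unfolding M_def by auto
    show ?thesis unfolding V_def Vk_def Let_def by measurable
  qed
  have ev1: "eventually (\<lambda>n. prob_space (M n)) sequentially"
    using ev0 by eventually_elim (simp add: M_def mod(1))
  have ev2: "eventually (\<lambda>n. V n \<in> borel_measurable (M n)) sequentially"
    using ev0 by eventually_elim (rule Vmeas)
  show "(k \<in> Kzero T0 Q K \<longrightarrow>
        (\<exists>L>0. (\<lambda>n. (\<integral>w. Vk n (T1 n) (T0 n) k w \<partial>popM n (p1 n) (Q n)) / real n) \<longlonglongrightarrow> L) \<and>
        (\<forall>e>0. (\<lambda>n. measure (popM n (p1 n) (Q n))
            {w \<in> space (popM n (p1 n) (Q n)).
               \<bar>Vk n (T1 n) (T0 n) k w / real n
                - (\<integral>v. Vk n (T1 n) (T0 n) k v \<partial>popM n (p1 n) (Q n)) / real n\<bar> > e})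
          \<longlonglongrightarrow> 0) \<and>
        (\<lambda>n. \<integral>w. (if Vk n (T1 n) (T0 n) k w > 0 then 1 / sqrt (Vk n (T1 n) (T0 n) k w) else 0)
              \<partial>popM n (p1 n) (Q n)) \<longlonglongrightarrow> 0 \<and>
        (\<lambda>n. measure (popM n (p1 n) (Q n))
            {w \<in> space (popM n (p1 n) (Q n)). Vk n (T1 n) (T0 n) k w = 0}) \<longlonglongrightarrow> 0) \<and>
     (k \<notin> Kzero T0 Q K \<longrightarrow>
        (\<lambda>n. (\<integral>w. Vk n (T1 n) (T0 n) k w \<partial>popM n (p1 n) (Q n)) / real n) \<longlonglongrightarrow> 0 \<and>
        (\<forall>e>0. (\<lambda>n. measure (popM n (p1 n) (Q n))
            {w \<in> space (popM n (p1 n) (Q n)). \<bar>Vk n (T1 n) (T0 n) k w / real n\<bar> > e})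
          \<longlonglongrightarrow> 0))"
  proof (intro conjI impI)
    assume kz: "k \<in> Kzero T0 Q K"
    then have dpos: "dl k > 0" and hl: "lim (\<lambda>n. hrate n (T0 n) k) < 1" and g1p: "g1 > 0" and g0p: "g0 > 0"
      unfolding Kzero_def dl_def g1_def g0_def G1_def G0_def by auto
    have mpos: "m > 0" using dpos mge by simp
    have hlim: "(\<lambda>n. hrate n (T0 n) k) \<longlonglongrightarrow> dl k / m"
    proof -
      have l: "(\<lambda>n. (real (dcnt n (T0 n) k) / real n) / (real (ncnt n (T0 n) k) / real n)) \<longlonglongrightarrow> dl k / m"
        using mpos kK by (intro tendsto_divide dlim nlim) auto
      have e: "eventually (\<lambda>n. (real (dcnt n (T0 n) k) / real n) / (real (ncnt n (T0 n) k) / real n) = hrate n (T0 n) k) sequentially"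
        using ev0 by eventually_elim (simp add: hrate_def)
      show ?thesis using tendsto_cong[OF e] l by blast
    qed
    then have "lim (\<lambda>n. hrate n (T0 n) k) = dl k / m" by (rule limI)
    then have dm: "dl k < m" using hl mpos by (simp add: divide_less_eq)
    define a1 where "a1 = (\<lambda>n. real (ncnt n (T0 n) k) * (p1 n * G1 n) / real n)"
    define a0 where "a0 = (\<lambda>n. real (ncnt n (T0 n) k) * ((1 - p1 n) * G0 n) / real n)"
    define b where "b = (\<lambda>n. real (dcnt n (T0 n) k) * (p1 n * G1 n + (1 - p1 n) * G0 n) / real n)"
    define \<alpha>1 where "\<alpha>1 = m * (pl * g1)"
    define \<alpha>0 where "\<alpha>0 = m * (ql * g0)"
    define \<beta> where "\<beta> = dl k * (pl * g1 + ql * g0)"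
    have a1lim: "a1 \<longlonglongrightarrow> \<alpha>1"
    proof -
      have "(\<lambda>n. (real (ncnt n (T0 n) k) / real n) * (p1 n * G1 n)) \<longlonglongrightarrow> \<alpha>1"
        unfolding \<alpha>1_def by (intro tendsto_mult nlim pl(2) g1lim)
      moreover have "(\<lambda>n. (real (ncnt n (T0 n) k) / real n) * (p1 n * G1 n)) = a1" unfolding a1_def by auto
      ultimately show ?thesis by simp
    qed
    have a0lim: "a0 \<longlonglongrightarrow> \<alpha>0"
    proof -
      have "(\<lambda>n. (real (ncnt n (T0 n) k) / real n) * ((1 - p1 n) * G0 n)) \<longlonglongrightarrow> \<alpha>0"
        unfolding \<alpha>0_def by (intro tendsto_mult nlim ql(2) g0lim)
      moreover have "(\<lambda>n. (real (ncnt n (T0 n) k) / real n) * ((1 - p1 n) * G0 n)) = a0" unfolding a0_def by auto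
      ultimately show ?thesis by simp
    qed
    have blim: "b \<longlonglongrightarrow> \<beta>"
    proof -
      have "(\<lambda>n. (real (dcnt n (T0 n) k) / real n) * (p1 n * G1 n + (1 - p1 n) * G0 n)) \<longlonglongrightarrow> \<beta>"
        unfolding \<beta>_def by (intro tendsto_mult tendsto_add dlim[OF kK] pl(2) g1lim ql(2) g0lim)
      moreover have "(\<lambda>n. (real (dcnt n (T0 n) k) / real n) * (p1 n * G1 n + (1 - p1 n) * G0 n)) = b" unfolding b_def by auto
      ultimately show ?thesis by simp
    qed
    define s where "s = pl * g1 + ql * g0"
    have spos: "s > 0" unfolding s_def using pl g1p ql g0p by (simp add: add_pos_pos)
    have asum: "\<alpha>1 + \<alpha>0 = m * s" unfolding \<alpha>1_def \<alpha>0_def s_def by (simp add: algebra_simps)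
    have apos: "\<alpha>1 + \<alpha>0 > 0" unfolding asum using mpos spos by simp
    have a1p: "\<alpha>1 > 0" unfolding \<alpha>1_def using mpos pl g1p by simp
    have a0p: "\<alpha>0 > 0" unfolding \<alpha>0_def using mpos ql g0p by simp
    have bp: "\<beta> > 0" unfolding \<beta>_def s_def[symmetric] using dpos spos by simp
    have abp: "(\<alpha>1 + \<alpha>0) - \<beta> > 0" unfolding asum \<beta>_def s_def[symmetric] using dm spos
      by (simp add: left_diff_distrib[symmetric])
    define L where "L = Ff \<alpha>1 \<alpha>0 \<beta> 0"
    have Lpos: "L > 0" unfolding L_def Ff_def using apos a1p a0p bp abp by simp
    define X1 where "X1 = (\<lambda>n w. real (N1 n (T1 n) (T0 n) k w) / real n)"
    define X0 where "X0 = (\<lambda>n w. real (N0 n (T1 n) (T0 n) k w) / real n)"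
    define Y where "Y = (\<lambda>n w. real (Dk n (T1 n) (T0 n) k w) / real n)"
    have conc: "\<exists>c>0. eventually (\<lambda>n. measure (M n) {w\<in>space (M n). \<bar>V n w / real n - L\<bar> \<ge> \<epsilon>}
                  \<le> 6 * exp (-c * real n)) sequentially" if eps: "\<epsilon> > 0" for \<epsilon>
      unfolding L_def
    proof (rule conc_main[where ?X1.0=X1 and ?X0.0=X0 and Y=Y and M=M and W="\<lambda>n w. V n w / real n", OF _ a1lim a0lim blim apos eps])
      show "eventually (\<lambda>n. prob_space (M n) \<and> X1 n \<in> borel_measurable (M n) \<and>
        X0 n \<in> borel_measurable (M n) \<and> Y n \<in> borel_measurable (M n) \<and>
        (\<forall>e\<ge>0. measure (M n) {w\<in>space (M n). \<bar>X1 n w - a1 n\<bar> \<ge> e} \<le> 2 * exp (-2 * real n * e\<^sup>2)) \<and>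
        (\<forall>e\<ge>0. measure (M n) {w\<in>space (M n). \<bar>X0 n w - a0 n\<bar> \<ge> e} \<le> 2 * exp (-2 * real n * e\<^sup>2)) \<and>
        (\<forall>e\<ge>0. measure (M n) {w\<in>space (M n). \<bar>Y n w - b n\<bar> \<ge> e} \<le> 2 * exp (-2 * real n * e\<^sup>2)) \<and>
        (\<forall>w\<in>space (M n). V n w / real n = Ff (X1 n w) (X0 n w) (Y n w) (1 / real n))) sequentially"
        using ev0
      proof eventually_elim
        case (elim n)
        have c1: "measure (M n) {w\<in>space (M n). \<bar>X1 n w - a1 n\<bar> \<ge> e} \<le> 2 * exp (-2 * real n * e\<^sup>2)" if e: "e \<ge> 0" for e
          unfolding X1_def a1_def M_def G1_def
          by (rule conc_scale[OF elim mod(7)[OF elim]]) (use e elim in simp)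
        have c0: "measure (M n) {w\<in>space (M n). \<bar>X0 n w - a0 n\<bar> \<ge> e} \<le> 2 * exp (-2 * real n * e\<^sup>2)" if e: "e \<ge> 0" for e
          unfolding X0_def a0_def M_def G0_def
          by (rule conc_scale[OF elim mod(8)[OF elim]]) (use e elim in simp)
        have cD: "measure (M n) {w\<in>space (M n). \<bar>Y n w - b n\<bar> \<ge> e} \<le> 2 * exp (-2 * real n * e\<^sup>2)" if e: "e \<ge> 0" for e
          unfolding Y_def b_def M_def G1_def G0_def
          by (rule conc_scale[OF elim mod(9)[OF elim]]) (use e elim in simp)
        have m1: "X1 n \<in> borel_measurable (M n)" unfolding X1_def M_def using mod(2)[OF elim] by measurable
        have m0: "X0 n \<in> borel_measurable (M n)" unfolding X0_def M_def using mod(3)[OF elim] by measurable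
        have mD: "Y n \<in> borel_measurable (M n)" unfolding Y_def M_def using mod(4)[OF elim] by measurable
        have W: "\<forall>w\<in>space (M n). V n w / real n = Ff (X1 n w) (X0 n w) (Y n w) (1 / real n)"
          unfolding X1_def X0_def Y_def using Vp[OF elim] by blast
        show ?case using ev1 mod(1)[OF elim] m1 m0 mD c1 c0 cD W unfolding M_def by blast
      qed
    qed
    have ev3: "eventually (\<lambda>n. n > 0 \<and> (\<forall>w\<in>space (M n). 0 \<le> V n w \<and> V n w \<le> real n \<and>
                  (V n w > 0 \<longrightarrow> V n w \<ge> 1 / (2 * real n)))) sequentially"
      using ev0 by eventually_elim (use Vp in blast)
    note fp = final_pos[OF ev1 ev2 ev3 conc Lpos]
    show "\<exists>L>0. (\<lambda>n. (\<integral>w. Vk n (T1 n) (T0 n) k w \<partial>popM n (p1 n) (Q n)) / real n) \<longlonglongrightarrow> L"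
      using fp(1) Lpos unfolding M_def V_def by blast
    show "\<forall>e>0. (\<lambda>n. measure (popM n (p1 n) (Q n))
            {w \<in> space (popM n (p1 n) (Q n)).
               \<bar>Vk n (T1 n) (T0 n) k w / real n
                - (\<integral>v. Vk n (T1 n) (T0 n) k v \<partial>popM n (p1 n) (Q n)) / real n\<bar> > e})
          \<longlonglongrightarrow> 0"
      using fp(2) unfolding M_def V_def by blast
    show "(\<lambda>n. \<integral>w. (if Vk n (T1 n) (T0 n) k w > 0 then 1 / sqrt (Vk n (T1 n) (T0 n) k w) else 0)
              \<partial>popM n (p1 n) (Q n)) \<longlonglongrightarrow> 0"
      using fp(3) unfolding M_def V_def by blast
    show "(\<lambda>n. measure (popM n (p1 n) (Q n))
            {w \<in> space (popM n (p1 n) (Q n)). Vk n (T1 n) (T0 n) k w = 0}) \<longlonglongrightarrow> 0"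
      using fp(4) unfolding M_def V_def by blast
  next
    assume kz: "k \<notin> Kzero T0 Q K"
    have nk: "\<not> (dl k > 0 \<and> lim (\<lambda>n. hrate n (T0 n) k) < 1 \<and> g1 > 0 \<and> g0 > 0)"
      using kz kK unfolding Kzero_def dl_def g1_def g0_def G1_def G0_def by auto
    have ev3: "eventually (\<lambda>n. n > 0 \<and> (\<forall>w\<in>space (M n). 0 \<le> V n w \<and> V n w \<le> real n)) sequentially"
      using ev0 by eventually_elim (use Vp in blast)
    have cint: "measure (M n) (space (M n)) = 1" if n: "n > 0" for n
    proof -
      interpret P: prob_space "M n" unfolding M_def by (rule mod(1)[OF n])
      show ?thesis by (simp add: P.prob_space)
    qed
    have iA: "(\<integral>w. V n w \<partial>M n) \<le> real (dcnt n (T0 n) k)" if n: "n > 0" for n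
    proof -
      have "(\<integral>w. V n w \<partial>M n) \<le> (\<integral>w. real (dcnt n (T0 n) k) \<partial>M n)"
        by (rule int_bound[OF _ Vmeas[OF n] borel_measurable_const, where B="real (dcnt n (T0 n) k)"])
           (use mod(1)[OF n] Vp[OF n] in \<open>auto simp: M_def\<close>)
      then show ?thesis using cint[OF n] by simp
    qed
    have iD: "(\<integral>w. V n w \<partial>M n) \<le> real (ncnt n (T0 n) k) - real (dcnt n (T0 n) k)" if n: "n > 0" for n
    proof -
      have "(\<integral>w. V n w \<partial>M n) \<le> (\<integral>w. real (ncnt n (T0 n) k) - real (dcnt n (T0 n) k) \<partial>M n)"
        by (rule int_bound[OF _ Vmeas[OF n] borel_measurable_const, where B="real (ncnt n (T0 n) k) - real (dcnt n (T0 n) k)"])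
           (use mod(1)[OF n] Vp[OF n] in \<open>auto simp: M_def\<close>)
      then show ?thesis using cint[OF n] by simp
    qed
    have iB: "(\<integral>w. V n w \<partial>M n) \<le> real (ncnt n (T0 n) k) * (p1 n * G1 n)" if n: "n > 0" for n
    proof -
      have bX: "real (N1 n (T1 n) (T0 n) k w) \<le> real n" for w
        using mod(13)[OF n, where w=w] by (smt (verit) of_nat_0_le_iff)
      have "(\<integral>w. V n w \<partial>M n) \<le> (\<integral>w. real (N1 n (T1 n) (T0 n) k w) \<partial>M n)"
        by (rule int_bound[OF _ Vmeas[OF n], where B="real n"])
           (use mod(1)[OF n] mod(2)[OF n] bX Vp[OF n] in \<open>auto simp: M_def simp del: of_nat_le_iff\<close>)
      then show ?thesis using mod(5)[OF n] unfolding M_def G1_def by simp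
    qed
    have iC: "(\<integral>w. V n w \<partial>M n) \<le> real (ncnt n (T0 n) k) * ((1 - p1 n) * G0 n)" if n: "n > 0" for n
    proof -
      have bX: "real (N0 n (T1 n) (T0 n) k w) \<le> real n" for w
        using mod(13)[OF n, where w=w] by (smt (verit) of_nat_0_le_iff)
      have "(\<integral>w. V n w \<partial>M n) \<le> (\<integral>w. real (N0 n (T1 n) (T0 n) k w) \<partial>M n)"
        by (rule int_bound[OF _ Vmeas[OF n], where B="real n"])
           (use mod(1)[OF n] mod(3)[OF n] bX Vp[OF n] in \<open>auto simp: M_def simp del: of_nat_le_iff\<close>)
      then show ?thesis using mod(6)[OF n] unfolding M_def G0_def by simp
    qed
    obtain r where rlim: "r \<longlonglongrightarrow> 0" and ev4: "eventually (\<lambda>n. (\<integral>w. V n w \<partial>M n) / real n \<le> r n) sequentially"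
    proof -
      consider "dl k \<le> 0" | "g1 \<le> 0" | "g0 \<le> 0" | "dl k > 0" "\<not> lim (\<lambda>n. hrate n (T0 n) k) < 1"
        using nk by force
      then show ?thesis
      proof cases
        case 1
        then have "dl k = 0" using dk0 by simp
        then have "(\<lambda>n. real (dcnt n (T0 n) k) / real n) \<longlonglongrightarrow> 0" using dlim[OF kK] by simp
        moreover have "eventually (\<lambda>n. (\<integral>w. V n w \<partial>M n) / real n \<le> real (dcnt n (T0 n) k) / real n) sequentially"
          using ev0 by eventually_elim (use iA in \<open>simp add: divide_right_mono\<close>)
        ultimately show ?thesis using that by blast
      next
        case 2
        then have "g1 = 0" using g10 by simp
        then have "(\<lambda>n. (real (ncnt n (T0 n) k) / real n) * (p1 n * G1 n)) \<longlonglongrightarrow> 0"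
          using tendsto_mult[OF nlim tendsto_mult[OF pl(2) g1lim]] by simp
        moreover have "eventually (\<lambda>n. (\<integral>w. V n w \<partial>M n) / real n \<le> (real (ncnt n (T0 n) k) / real n) * (p1 n * G1 n)) sequentially"
          using ev0 by eventually_elim (use iB in \<open>simp add: divide_right_mono\<close>)
        ultimately show ?thesis using that by blast
      next
        case 3
        then have "g0 = 0" using g00 by simp
        then have "(\<lambda>n. (real (ncnt n (T0 n) k) / real n) * ((1 - p1 n) * G0 n)) \<longlonglongrightarrow> 0"
          using tendsto_mult[OF nlim tendsto_mult[OF ql(2) g0lim]] by simp
        moreover have "eventually (\<lambda>n. (\<integral>w. V n w \<partial>M n) / real n \<le> (real (ncnt n (T0 n) k) / real n) * ((1 - p1 n) * G0 n)) sequentially"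
          using ev0 by eventually_elim (use iC in \<open>simp add: divide_right_mono\<close>)
        ultimately show ?thesis using that by blast
      next
        case 4
        have mpos: "m > 0" using 4 mge by simp
        have hlim: "(\<lambda>n. hrate n (T0 n) k) \<longlonglongrightarrow> dl k / m"
        proof -
          have l: "(\<lambda>n. (real (dcnt n (T0 n) k) / real n) / (real (ncnt n (T0 n) k) / real n)) \<longlonglongrightarrow> dl k / m"
            using mpos kK by (intro tendsto_divide dlim nlim) auto
          have e: "eventually (\<lambda>n. (real (dcnt n (T0 n) k) / real n) / (real (ncnt n (T0 n) k) / real n) = hrate n (T0 n) k) sequentially"
            using ev0 by eventually_elim (simp add: hrate_def)
          show ?thesis using tendsto_cong[OF e] l by blast
        qed
        then have "lim (\<lambda>n. hrate n (T0 n) k) = dl k / m" by (rule limI)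
        then have "dl k \<ge> m" using 4 mpos by (simp add: divide_less_eq)
        then have mdl: "m = dl k" using mge by simp
        have "(\<lambda>n. real (ncnt n (T0 n) k) / real n - real (dcnt n (T0 n) k) / real n) \<longlonglongrightarrow> m - dl k"
          by (intro tendsto_diff nlim dlim kK)
        then have "(\<lambda>n. real (ncnt n (T0 n) k) / real n - real (dcnt n (T0 n) k) / real n) \<longlonglongrightarrow> 0"
          using mdl by simp
        moreover have "eventually (\<lambda>n. (\<integral>w. V n w \<partial>M n) / real n \<le> real (ncnt n (T0 n) k) / real n - real (dcnt n (T0 n) k) / real n) sequentially"
          using ev0 by eventually_elim (use iD in \<open>simp add: divide_right_mono diff_divide_distrib[symmetric]\<close>)
        ultimately show ?thesis using that by blast
      qed
    qed
    note fz = final_zero[OF ev1 ev2 ev3 ev4 rlim]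
    show "(\<lambda>n. (\<integral>w. Vk n (T1 n) (T0 n) k w \<partial>popM n (p1 n) (Q n)) / real n) \<longlonglongrightarrow> 0"
      using fz(1) unfolding M_def V_def by blast
    show "\<forall>e>0. (\<lambda>n. measure (popM n (p1 n) (Q n))
            {w \<in> space (popM n (p1 n) (Q n)). \<bar>Vk n (T1 n) (T0 n) k w / real n\<bar> > e})
          \<longlonglongrightarrow> 0"
      using fz(2) unfolding M_def V_def by blast
  qed
qed

end
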